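(* Let $d=2$, let $X\equiv\varphi$ be deterministic, where $\varphi(t)=(2\pi)^{-1}\exp(-\|t\|^2/2)$ is the two-dimensional standard normal density, let $\Psi\equiv1$ (so $\Phi$ is a homogeneous Poisson process on $\mathbb{R}^2$ with intensity $\tau^{-1}$), and let $p_0=1$. Then the intensity $\rho_\tau$ of the process of visible storm centres $\Phi^{\ast,0}_{\mathrm{th}}$ satisfies $$\lim_{\tau\to0}\rho_\tau(\xi)=\varphi(0)\Big[\int_{\mathbb{R}^2}\varphi(\xi-\xi')\,\mathrm{d}\xi'\Big]^{-1}=(2\pi)^{-1}\quad\text{for all }\xi\in\mathbb{R}^2.$$
   Context: Given $\tau>0$: each point $\xi$ of the homogeneous Poisson process $\Phi$ on $\mathbb{R}^2$ with intensity $\tau^{-1}$ independently gets the mark function $m_\xi(\cdot)=U_\xi\varphi(\cdot-\xi)$, with $U_\xi$ i.i.d. of density $\tau u^{-2}\mathbf 1_{(\tau,\infty)}(u)$, independent of $\Phi$. The process of visible storm centres $\Phi^{\ast,0}_{\mathrm{th}}$ consists of those $\xi\in\Phi$ such that no other point $\xi'\in\Phi$ has $m_{\xi'}(\xi)>m_\xi(\xi)$, i.e. $U_{\xi'}\varphi(\xi-\xi')>U_\xi\varphi(0)$. Its intensity $\rho_\tau$ is defined by $\mathbb{E}\#(\Phi^{\ast,0}_{\mathrm{th}}\cap B)=\int_B\rho_\tau$. *)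

theory Defs
  imports "HOL-Probability.Probability"
begin

definition ecard :: "'a set \<Rightarrow> ennreal" where
  "ecard S = (if finite S then of_nat (card S) else \<infinity>)"

definition poisson_process :: "'w measure \<Rightarrow> ('w \<Rightarrow> 'a set) \<Rightarrow> 'a measure \<Rightarrow> bool" where
  "poisson_process M P N \<longleftrightarrow>
     prob_space M \<and>
     (\<forall>A\<in>sets N. emeasure N A = \<infinity> \<longrightarrow> (AE \<omega> in M. infinite (P \<omega> \<inter> A))) \<and>
     (\<forall>A\<in>sets N. emeasure N A < \<infinity> \<longrightarrow>
        (AE \<omega> in M. finite (P \<omega> \<inter> A)) \<and>
        (\<forall>k::nat. {\<omega>\<in>space M. card (P \<omega> \<inter> A) = k} \<in> sets M \<and>
           prob_space.prob M {\<omega>\<in>space M. card (P \<omega> \<inter> A) = k}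
             = measure N A ^ k / fact k * exp (- measure N A))) \<and>
     (\<forall>I (A :: nat \<Rightarrow> 'a set). finite I \<longrightarrow> (\<forall>i\<in>I. A i \<in> sets N \<and> emeasure N (A i) < \<infinity>)
        \<longrightarrow> disjoint_family_on A I
        \<longrightarrow> prob_space.indep_vars M (\<lambda>_. count_space UNIV) (\<lambda>i \<omega>. card (P \<omega> \<inter> A i)) I)"

definition phi :: "real^2 \<Rightarrow> real" where
  "phi t = exp (- (norm t)\<^sup>2 / 2) / (2 * pi)"

text \<open>Intensity measure of the marked Poisson process on R^2 x R: ground intensity
  1/tau times Lebesgue measure, independent marks with density tau u^-2 on (tau, inf).\<close>
definition storm_intensity :: "real \<Rightarrow> ((real^2) \<times> real) measure" where
  "storm_intensity \<tau> = density (lborel \<Otimes>\<^sub>M lborel)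
     (\<lambda>(x, u). ennreal (1 / \<tau>) * ennreal (\<tau> / u\<^sup>2 * indicator {\<tau><..} u))"

definition visible :: "((real^2) \<times> real) set \<Rightarrow> (real^2) set" where
  "visible S = {\<xi>. \<exists>u. (\<xi>, u) \<in> S \<and>
      \<not> (\<exists>\<xi>' u'. (\<xi>', u') \<in> S \<and> \<xi>' \<noteq> \<xi> \<and> u' * phi (\<xi> - \<xi>') > u * phi 0)}"

end

theory Submission
  imports Defs "HOL-Real_Asymp.Real_Asymp"
begin



lemma gauss_full:
  "(\<integral>\<^sup>+t. ennreal (exp (-((t - c)\<^sup>2) / 2)) \<partial>lborel) = ennreal (sqrt (2*pi))"
proof -
  have nd: "(\<integral>\<^sup>+t. ennreal (normal_density c 1 t) \<partial>lborel) = 1"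
    by (subst nn_integral_eq_integral) (auto simp: normal_density_nonneg)
  have eq: "ennreal (exp (-((t - c)\<^sup>2) / 2)) = ennreal (sqrt (2*pi)) * ennreal (normal_density c 1 t)" for t
    by (simp add: normal_density_def ennreal_mult[symmetric])
  have "(\<integral>\<^sup>+t. ennreal (exp (-((t - c)\<^sup>2) / 2)) \<partial>lborel)
      = (\<integral>\<^sup>+t. ennreal (sqrt (2*pi)) * ennreal (normal_density c 1 t) \<partial>lborel)"
    by (simp only: eq)
  also have "\<dots> = ennreal (sqrt (2*pi))"
    by (subst nn_integral_cmult) (auto simp: nd)
  finally show ?thesis .
qed

lemma gauss_half:
  "(\<integral>\<^sup>+t. ennreal (exp (-((t - c)\<^sup>2) / 2)) * indicator {..c} t \<partial>lborel) = ennreal (sqrt (2*pi) / 2)"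
  "(\<integral>\<^sup>+t. ennreal (exp (-((t - c)\<^sup>2) / 2)) * indicator {c..} t \<partial>lborel) = ennreal (sqrt (2*pi) / 2)"
proof -
  define g where "g t = ennreal (exp (-((t - c)\<^sup>2) / 2))" for t
  have [measurable]: "g \<in> borel_measurable borel" unfolding g_def by measurable
  have refl: "(\<integral>\<^sup>+t. g t * indicator {c..} t \<partial>lborel) = (\<integral>\<^sup>+t. g t * indicator {..c} t \<partial>lborel)"
  proof -
    have "(\<integral>\<^sup>+t. g t * indicator {c..} t \<partial>lborel)
        = (\<integral>\<^sup>+x. g (2*c + (-1) * x) * indicator {c..} (2*c + (-1) * x) \<partial>lborel)"
      using nn_integral_real_affine[of "\<lambda>t. g t * indicator {c..} t" "-1" "2*c"] by simp
    also have "\<dots> = (\<integral>\<^sup>+t. g t * indicator {..c} t \<partial>lborel)"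
      by (auto intro!: nn_integral_cong simp: g_def power2_commute split: split_indicator
               simp del: exp_le_cancel_iff)
    finally show ?thesis .
  qed
  have sum: "(\<integral>\<^sup>+t. g t * indicator {..c} t \<partial>lborel) + (\<integral>\<^sup>+t. g t * indicator {c..} t \<partial>lborel)
      = ennreal (sqrt (2*pi))"
  proof -
    have "(\<integral>\<^sup>+t. g t * indicator {..c} t \<partial>lborel) + (\<integral>\<^sup>+t. g t * indicator {c..} t \<partial>lborel)
       = (\<integral>\<^sup>+t. g t * indicator {..c} t + g t * indicator {c..} t \<partial>lborel)"
      by (subst nn_integral_add) auto
    also have "\<dots> = (\<integral>\<^sup>+t. g t \<partial>lborel)"
      by (rule nn_integral_cong_AE) (use AE_lborel_singleton[of c] in \<open>auto split: split_indicator\<close>)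
    finally show ?thesis using gauss_full[of c] by (simp add: g_def)
  qed
  have "(\<integral>\<^sup>+t. g t * indicator {..c} t \<partial>lborel) = ennreal (sqrt (2*pi) / 2)"
  proof -
    have "2 * (\<integral>\<^sup>+t. g t * indicator {..c} t \<partial>lborel) = ennreal (sqrt (2*pi))"
    proof -
      have "(\<integral>\<^sup>+t. g t * indicator {..c} t \<partial>lborel) + (\<integral>\<^sup>+t. g t * indicator {..c} t \<partial>lborel) = ennreal (sqrt (2*pi))"
        using sum refl by simp
      then show ?thesis by (metis mult_2)
    qed
    then have "(\<integral>\<^sup>+t. g t * indicator {..c} t \<partial>lborel) = ennreal (sqrt (2*pi)) / 2"
    proof -
      assume h: "2 * (\<integral>\<^sup>+t. g t * indicator {..c} t \<partial>lborel) = ennreal (sqrt (2*pi))"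
      have "(\<integral>\<^sup>+t. g t * indicator {..c} t \<partial>lborel) = ((\<integral>\<^sup>+t. g t * indicator {..c} t \<partial>lborel) * 2) / 2"
        by (rule ennreal_mult_divide_eq[symmetric]) auto
      also have "\<dots> = ennreal (sqrt (2*pi)) / 2" using h by (simp add: mult.commute)
      finally show ?thesis .
    qed
    then show ?thesis by (simp add: ennreal_divide_numeral)
  qed
  then show "(\<integral>\<^sup>+t. ennreal (exp (-((t - c)\<^sup>2) / 2)) * indicator {..c} t \<partial>lborel) = ennreal (sqrt (2*pi) / 2)"
    "(\<integral>\<^sup>+t. ennreal (exp (-((t - c)\<^sup>2) / 2)) * indicator {c..} t \<partial>lborel) = ennreal (sqrt (2*pi) / 2)"
    using refl by (simp_all add: g_def)
qed

lemma Basis_vec2: "(Basis :: (real^2) set) = {axis 1 1, axis 2 1}"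
  by (auto simp: Basis_vec_def UNIV_2)

lemma axis12: "axis (1::2) (1::real) \<noteq> axis 2 1"
  by (simp add: axis_eq_axis)

lemma nn_integral_vec2:
  fixes f1 f2 :: "real \<Rightarrow> real"
  assumes [measurable]: "f1 \<in> borel_measurable borel" "f2 \<in> borel_measurable borel"
    and "\<And>t. 0 \<le> f1 t" "\<And>t. 0 \<le> f2 t"
  shows "(\<integral>\<^sup>+x. ennreal (f1 ((x::real^2)$1) * f2 (x$2)) \<partial>lborel)
     = (\<integral>\<^sup>+t. ennreal (f1 t) \<partial>lborel) * (\<integral>\<^sup>+t. ennreal (f2 t) \<partial>lborel)"
proof -
  define f where "f b t = ennreal ((if b = axis 1 1 then f1 else f2) t)" for b :: "real^2" and t
  have m: "\<And>b. f b \<in> borel_measurable borel"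
  proof -
    fix b show "f b \<in> borel_measurable borel"
      by (cases "b = axis 1 1") (simp_all add: f_def[abs_def])
  qed
  have n: "\<And>b x. 0 \<le> f b x" by (simp add: f_def)
  have "(\<integral>\<^sup>+x. (\<Prod>b\<in>Basis. f b (x \<bullet> b)) \<partial>lborel) = (\<Prod>b\<in>Basis. (\<integral>\<^sup>+x. f b x \<partial>lborel))"
    by (rule nn_integral_lborel_prod[OF m n])
  moreover have "(\<Prod>b\<in>Basis. f b (x \<bullet> b)) = ennreal (f1 (x$1) * f2 (x$2))" for x :: "real^2"
    using axis12 by (simp add: Basis_vec2 f_def cart_eq_inner_axis ennreal_mult assms)
  moreover have "(\<Prod>b\<in>(Basis::(real^2) set). (\<integral>\<^sup>+x. f b x \<partial>lborel))
      = (\<integral>\<^sup>+t. ennreal (f1 t) \<partial>lborel) * (\<integral>\<^sup>+t. ennreal (f2 t) \<partial>lborel)"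
    using axis12 by (simp add: Basis_vec2 f_def)
  ultimately show ?thesis by simp
qed

lemma norm_vec2_sq: "(norm (x::real^2))\<^sup>2 = (x$1)\<^sup>2 + (x$2)\<^sup>2"
  by (simp add: norm_vec_def L2_set_def sum_2)





lemma tail_int:
  assumes "0 < c"
  shows "(\<integral>\<^sup>+u. ennreal (1 / u\<^sup>2) * indicator {c<..} u \<partial>lborel) = ennreal (1 / c)"
proof -
  have "(\<integral>\<^sup>+u. ennreal (1 / u\<^sup>2) * indicator {c<..} u \<partial>lborel)
      = (\<integral>\<^sup>+u. ennreal (1 / u\<^sup>2) * indicator {c..} u \<partial>lborel)"
    by (rule nn_integral_cong_AE) (use AE_lborel_singleton[of c] in \<open>auto split: split_indicator\<close>)
  also have "\<dots> = ennreal (0 - (- 1 / c))"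
  proof (rule nn_integral_FTC_atLeast)
    show "(\<lambda>u::real. 1 / u\<^sup>2) \<in> borel_measurable borel" by measurable
    fix x assume "c \<le> x"
    then have "x \<noteq> 0" using assms by auto
    then show "((\<lambda>u. - 1 / u) has_real_derivative 1 / x\<^sup>2) (at x)"
      by (auto intro!: derivative_eq_intros simp: power2_eq_square field_simps)
    show "0 \<le> 1 / x\<^sup>2" by simp
  next
    show "((\<lambda>u::real. - 1 / u) \<longlongrightarrow> 0) at_top" by real_asymp
  qed
  finally show ?thesis by simp
qed

lemma interval_int:
  assumes "0 < a" "a \<le> b"
  shows "(\<integral>\<^sup>+u. ennreal (1 / u\<^sup>2) * indicator {a<..b} u \<partial>lborel) = ennreal (1 / a - 1 / b)"
proof -
  have "(\<integral>\<^sup>+u. ennreal (1 / u\<^sup>2) * indicator {a<..b} u \<partial>lborel)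
      = (\<integral>\<^sup>+u. ennreal (1 / u\<^sup>2) * indicator {a..b} u \<partial>lborel)"
    by (rule nn_integral_cong_AE) (use AE_lborel_singleton[of a] in \<open>auto split: split_indicator\<close>)
  also have "\<dots> = ennreal ((- 1 / b) - (- 1 / a))"
  proof (rule nn_integral_FTC_Icc)
    show "(\<lambda>u::real. 1 / u\<^sup>2) \<in> borel_measurable borel" by measurable
    fix x assume "x \<in> {a..b}"
    then have "x \<noteq> 0" using assms by auto
    then show "((\<lambda>u. - 1 / u) has_real_derivative 1 / x\<^sup>2) (at x)"
      by (auto intro!: derivative_eq_intros simp: power2_eq_square field_simps)
    show "0 \<le> 1 / x\<^sup>2" by simp
  qed (use assms in auto)
  finally show ?thesis by simp
qed

lemma storm_sets: "sets (storm_intensity \<tau>) = sets (borel \<Otimes>\<^sub>M borel)"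
  unfolding storm_intensity_def by (simp cong: sets_pair_measure_cong)

lemma storm_dens: "0 < \<tau> \<Longrightarrow>
   ennreal (1 / \<tau>) * ennreal (\<tau> / u\<^sup>2 * indicator {\<tau><..} u) = ennreal (1 / u\<^sup>2) * indicator {\<tau><..} u"
  by (auto simp: ennreal_mult[symmetric] split: split_indicator)

lemma storm_emeasure:
  assumes "0 < \<tau>" and A: "A \<in> sets (borel \<Otimes>\<^sub>M borel)"
  shows "emeasure (storm_intensity \<tau>) A
     = (\<integral>\<^sup>+x. \<integral>\<^sup>+u. ennreal (1 / u\<^sup>2) * indicator {\<tau><..} u * indicator A (x, u) \<partial>lborel \<partial>lborel)"
proof -
  have A': "A \<in> sets (lborel \<Otimes>\<^sub>M lborel)" using A by (simp cong: sets_pair_measure_cong)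
  have "emeasure (storm_intensity \<tau>) A
     = (\<integral>\<^sup>+p. (case p of (x, u) \<Rightarrow> ennreal (1 / \<tau>) * ennreal (\<tau> / u\<^sup>2 * indicator {\<tau><..} u)) * indicator A p
         \<partial>(lborel \<Otimes>\<^sub>M lborel))"
    unfolding storm_intensity_def by (rule emeasure_density) (use A' in \<open>auto\<close>)
  also have "\<dots> = (\<integral>\<^sup>+p. ennreal (1 / (snd p)\<^sup>2) * indicator {\<tau><..} (snd p) * indicator A p \<partial>(lborel \<Otimes>\<^sub>M lborel))"
    by (rule nn_integral_cong) (use assms(1) in \<open>auto simp: ennreal_mult[symmetric] split: split_indicator\<close>)
  also have "\<dots> = (\<integral>\<^sup>+x. \<integral>\<^sup>+u. ennreal (1 / u\<^sup>2) * indicator {\<tau><..} u * indicator A (x, u) \<partial>lborel \<partial>lborel)"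
    by (subst lborel.nn_integral_fst[symmetric]) (use A' in auto)
  finally show ?thesis .
qed




definition dI :: "real \<Rightarrow> real \<Rightarrow> real \<Rightarrow> real" where
  "dI a b t = max 0 (max (a - t) (t - b))"
definition DI :: "real \<Rightarrow> real \<Rightarrow> real \<Rightarrow> real" where
  "DI a b t = max \<bar>t - a\<bar> \<bar>t - b\<bar>"

lemma dI_cont[continuous_intros]: "continuous_on S (dI a b)"
  unfolding dI_def by (intro continuous_intros)
lemma DI_cont[continuous_intros]: "continuous_on S (DI a b)"
  unfolding DI_def by (intro continuous_intros)
lemma dI_meas[measurable]: "dI a b \<in> borel_measurable borel"
  by (intro borel_measurable_continuous_onI dI_cont)
lemma DI_meas[measurable]: "DI a b \<in> borel_measurable borel"
  by (intro borel_measurable_continuous_onI DI_cont)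

lemma gauss_half':
  "(\<integral>\<^sup>+t\<in>{..c}. ennreal (exp (- ((t - c)\<^sup>2 / 2))) \<partial>lborel) = ennreal (sqrt (2*pi) / 2)"
  "(\<integral>\<^sup>+t\<in>{c..}. ennreal (exp (- ((t - c)\<^sup>2 / 2))) \<partial>lborel) = ennreal (sqrt (2*pi) / 2)"
  using gauss_half[of c] by simp_all

lemma gauss_dI:
  assumes "a \<le> b"
  shows "(\<integral>\<^sup>+t. ennreal (exp (- (dI a b t)\<^sup>2 / 2)) \<partial>lborel) \<le> ennreal (sqrt (2*pi) + (b - a))"
proof -
  have "(\<integral>\<^sup>+t. ennreal (exp (- (dI a b t)\<^sup>2 / 2)) \<partial>lborel)
     \<le> (\<integral>\<^sup>+t. ennreal (exp (-((t - a)\<^sup>2) / 2)) * indicator {..a} t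
           + (indicator {a..b} t + ennreal (exp (-((t - b)\<^sup>2) / 2)) * indicator {b..} t) \<partial>lborel)"
  proof (rule nn_integral_mono)
    fix t
    show "ennreal (exp (- (dI a b t)\<^sup>2 / 2)) \<le> ennreal (exp (-((t - a)\<^sup>2) / 2)) * indicator {..a} t
           + (indicator {a..b} t + ennreal (exp (-((t - b)\<^sup>2) / 2)) * indicator {b..} t)"
    proof (cases "t < a")
      case True
      then have "dI a b t = a - t" using assms by (simp add: dI_def)
      then show ?thesis using True by (simp add: power2_commute)
    next
      case f1: False
      show ?thesis
      proof (cases "t \<le> b")
        case True
        then have "dI a b t = 0" using f1 by (simp add: dI_def)
        then show ?thesis using True f1 by simp
      next
        case False
        then have "dI a b t = t - b" using f1 by (simp add: dI_def)
        then show ?thesis using False f1 by simp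
      qed
    qed
  qed
  also have "\<dots> = ennreal (sqrt (2*pi) / 2) + (ennreal (b - a) + ennreal (sqrt (2*pi) / 2))"
    using assms by (simp add: nn_integral_add gauss_half')
  also have "\<dots> = ennreal (sqrt (2*pi) + (b - a))"
    using assms by (simp add: ennreal_plus[symmetric] del: ennreal_plus)
  finally show ?thesis .
qed

lemma gauss_DI:
  assumes "a \<le> b"
  shows "ennreal (sqrt (2*pi) - 2 * (b - a)) \<le> (\<integral>\<^sup>+t. ennreal (exp (- (DI a b t)\<^sup>2 / 2)) \<partial>lborel)"
proof -
  define X where "X = (\<integral>\<^sup>+t. ennreal (exp (-((t - b)\<^sup>2) / 2)) * indicator {..a} t \<partial>lborel)"
  define Y where "Y = (\<integral>\<^sup>+t. ennreal (exp (-((t - a)\<^sup>2) / 2)) * indicator {b<..} t \<partial>lborel)"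
  have X: "ennreal (sqrt (2*pi) / 2) \<le> X + ennreal (b - a)"
  proof -
    have "ennreal (sqrt (2*pi) / 2) = (\<integral>\<^sup>+t. ennreal (exp (-((t - b)\<^sup>2) / 2)) * indicator {..b} t \<partial>lborel)"
      by (simp add: gauss_half')
    also have "\<dots> \<le> (\<integral>\<^sup>+t. ennreal (exp (-((t - b)\<^sup>2) / 2)) * indicator {..a} t + indicator {a..b} t \<partial>lborel)"
      by (rule nn_integral_mono) (auto split: split_indicator)
    also have "\<dots> = X + ennreal (b - a)"
      using assms by (simp add: nn_integral_add X_def)
    finally show ?thesis .
  qed
  have Y: "ennreal (sqrt (2*pi) / 2) \<le> Y + ennreal (b - a)"
  proof -
    have "ennreal (sqrt (2*pi) / 2) = (\<integral>\<^sup>+t. ennreal (exp (-((t - a)\<^sup>2) / 2)) * indicator {a..} t \<partial>lborel)"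
      by (simp add: gauss_half')
    also have "\<dots> \<le> (\<integral>\<^sup>+t. ennreal (exp (-((t - a)\<^sup>2) / 2)) * indicator {b<..} t + indicator {a..b} t \<partial>lborel)"
      by (rule nn_integral_mono) (auto split: split_indicator)
    also have "\<dots> = Y + ennreal (b - a)"
      using assms by (simp add: nn_integral_add Y_def)
    finally show ?thesis .
  qed
  have XY: "X + Y \<le> (\<integral>\<^sup>+t. ennreal (exp (- (DI a b t)\<^sup>2 / 2)) \<partial>lborel)"
  proof -
    have "X + Y = (\<integral>\<^sup>+t. ennreal (exp (-((t - b)\<^sup>2) / 2)) * indicator {..a} t
                     + ennreal (exp (-((t - a)\<^sup>2) / 2)) * indicator {b<..} t \<partial>lborel)"
      by (simp add: nn_integral_add X_def Y_def)
    also have "\<dots> \<le> (\<integral>\<^sup>+t. ennreal (exp (- (DI a b t)\<^sup>2 / 2)) \<partial>lborel)"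
    proof (rule nn_integral_mono)
      fix t
      show "ennreal (exp (-((t - b)\<^sup>2) / 2)) * indicator {..a} t
                     + ennreal (exp (-((t - a)\<^sup>2) / 2)) * indicator {b<..} t
            \<le> ennreal (exp (- (DI a b t)\<^sup>2 / 2))"
      proof (cases "t \<le> a")
        case True
        then have "DI a b t = b - t" using assms by (simp add: DI_def)
        then show ?thesis using True assms by (simp add: power2_commute)
      next
        case f1: False
        show ?thesis
        proof (cases "b < t")
          case True
          then have "DI a b t = t - a" using f1 assms by (simp add: DI_def)
          then show ?thesis using True f1 by simp
        next
          case False
          then show ?thesis using f1 by simp
        qed
      qed
    qed
    finally show ?thesis .
  qed
  have "ennreal (sqrt (2*pi)) \<le> (X + Y) + ennreal (2 * (b - a))"
  proof -
    have "ennreal (sqrt (2*pi)) = ennreal (sqrt (2*pi) / 2) + ennreal (sqrt (2*pi) / 2)"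
      by (simp add: ennreal_plus[symmetric] del: ennreal_plus)
    also have "\<dots> \<le> (X + ennreal (b - a)) + (Y + ennreal (b - a))"
      using X Y by (rule add_mono)
    also have "\<dots> = (X + Y) + ennreal (2 * (b - a))"
      using assms by (simp add: ennreal_plus[symmetric] add_ac del: ennreal_plus)
    finally show ?thesis .
  qed
  then have "ennreal (sqrt (2*pi) - 2 * (b - a)) \<le> X + Y"
    using assms by (simp add: ennreal_minus[symmetric] ennreal_minus_le_iff add.commute)
  then show ?thesis using XY by (rule order_trans)
qed




definition Lf :: "real \<Rightarrow> real \<Rightarrow> real \<Rightarrow> real \<Rightarrow> real^2 \<Rightarrow> real" where
  "Lf a1 b1 a2 b2 x = exp ((dI a1 b1 (x$1))\<^sup>2 / 2) * exp ((dI a2 b2 (x$2))\<^sup>2 / 2)"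
definition Hf :: "real \<Rightarrow> real \<Rightarrow> real \<Rightarrow> real \<Rightarrow> real^2 \<Rightarrow> real" where
  "Hf a1 b1 a2 b2 x = exp ((DI a1 b1 (x$1))\<^sup>2 / 2) * exp ((DI a2 b2 (x$2))\<^sup>2 / 2)"
definition rbox :: "real \<Rightarrow> real \<Rightarrow> real \<Rightarrow> real \<Rightarrow> (real^2) set" where
  "rbox a1 b1 a2 b2 = {x. a1 \<le> x$1 \<and> x$1 \<le> b1 \<and> a2 \<le> x$2 \<and> x$2 \<le> b2}"
definition bin :: "real \<Rightarrow> real \<Rightarrow> real set" where
  "bin \<alpha> \<beta> = {u. 0 < u \<and> \<alpha> \<le> 1 / u \<and> 1 / u < \<beta>}"

lemma Lf_meas[measurable]: "Lf a1 b1 a2 b2 \<in> borel_measurable borel"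
  unfolding Lf_def by measurable
lemma Hf_meas[measurable]: "Hf a1 b1 a2 b2 \<in> borel_measurable borel"
  unfolding Hf_def by measurable
lemma box_sets[measurable]: "rbox a1 b1 a2 b2 \<in> sets borel"
proof -
  have "rbox a1 b1 a2 b2 = {x\<in>space borel. a1 \<le> x$1 \<and> x$1 \<le> b1 \<and> a2 \<le> x$2 \<and> x$2 \<le> b2}"
    by (simp add: rbox_def)
  also have "\<dots> \<in> sets borel" by measurable
  finally show ?thesis .
qed
lemma bin_sets[measurable]: "bin \<alpha> \<beta> \<in> sets borel"
proof -
  have "bin \<alpha> \<beta> = {u\<in>space borel. 0 < u \<and> \<alpha> \<le> 1 / u \<and> 1 / u < \<beta>}"
    by (simp add: bin_def)
  also have "\<dots> \<in> sets borel" by measurable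
  finally show ?thesis .
qed

lemma Lf_pos: "0 < Lf a1 b1 a2 b2 x" by (simp add: Lf_def)
lemma Hf_ge1: "1 \<le> Hf a1 b1 a2 b2 x"
  by (simp add: Hf_def exp_add[symmetric])
lemma Lf_ge1: "1 \<le> Lf a1 b1 a2 b2 x"
  by (simp add: Lf_def exp_add[symmetric])

lemma box_area: assumes "a1 \<le> b1" "a2 \<le> b2"
  shows "emeasure lborel (rbox a1 b1 a2 b2) = ennreal ((b1 - a1) * (b2 - a2))"
proof -
  have "emeasure lborel (rbox a1 b1 a2 b2) = (\<integral>\<^sup>+x. indicator (rbox a1 b1 a2 b2) x \<partial>lborel)"
    by simp
  also have "\<dots> = (\<integral>\<^sup>+x. ennreal (indicator {a1..b1} ((x::real^2)$1) * indicator {a2..b2} (x$2)) \<partial>lborel)"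
    by (rule nn_integral_cong) (auto simp: rbox_def split: split_indicator)
  also have "\<dots> = (\<integral>\<^sup>+t. ennreal (indicator {a1..b1} t) \<partial>lborel) * (\<integral>\<^sup>+t. ennreal (indicator {a2..b2} t) \<partial>lborel)"
    by (rule nn_integral_vec2) auto
  also have "\<dots> = ennreal ((b1 - a1) * (b2 - a2))"
    using assms by (simp add: ennreal_mult ennreal_indicator)
  finally show ?thesis .
qed

lemma bin_int:
  assumes "0 < \<tau>" "0 \<le> \<alpha>" "\<alpha> < \<beta>" "\<beta> * \<tau> \<le> 1"
  shows "(\<integral>\<^sup>+u. ennreal (1 / u\<^sup>2) * indicator {\<tau><..} u * indicator (bin \<alpha> \<beta>) u \<partial>lborel) = ennreal (\<beta> - \<alpha>)"
proof -
  have b0: "0 < \<beta>" using assms by linarith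
  have tb: "\<tau> \<le> 1 / \<beta>" using assms b0 by (simp add: field_simps)
  show ?thesis
  proof (cases "\<alpha> = 0")
    case True
    have "bin \<alpha> \<beta> = {1/\<beta><..}"
    proof (intro set_eqI iffI)
      fix x assume "x \<in> bin \<alpha> \<beta>"
      then have "0 < x" "1/x < \<beta>" by (auto simp: bin_def)
      then show "x \<in> {1/\<beta><..}" using b0 by (auto simp: field_simps)
    next
      fix x assume "x \<in> {1/\<beta><..}"
      then have x: "1/\<beta> < x" by simp
      have "0 < 1/\<beta>" using b0 by simp
      then have "0 < x" using x by linarith
      then show "x \<in> bin \<alpha> \<beta>" using x True b0 by (auto simp: bin_def field_simps)
    qed
    then have "(\<integral>\<^sup>+u. ennreal (1 / u\<^sup>2) * indicator {\<tau><..} u * indicator (bin \<alpha> \<beta>) u \<partial>lborel)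
        = (\<integral>\<^sup>+u. ennreal (1 / u\<^sup>2) * indicator {1/\<beta><..} u \<partial>lborel)"
      using tb by (intro nn_integral_cong) (auto split: split_indicator)
    also have "\<dots> = ennreal (\<beta> - \<alpha>)" using b0 True by (simp add: tail_int)
    finally show ?thesis .
  next
    case False
    then have a0: "0 < \<alpha>" using assms by simp
    have "bin \<alpha> \<beta> = {1/\<beta><..1/\<alpha>}"
    proof (intro set_eqI iffI)
      fix x assume "x \<in> bin \<alpha> \<beta>"
      then have "0 < x" "1/x < \<beta>" "\<alpha> \<le> 1/x" by (auto simp: bin_def)
      then show "x \<in> {1/\<beta><..1/\<alpha>}" using b0 a0 by (auto simp: field_simps)
    next
      fix x assume "x \<in> {1/\<beta><..1/\<alpha>}"
      then have x: "1/\<beta> < x" "x \<le> 1/\<alpha>" by auto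
      have "0 < 1/\<beta>" using b0 by simp
      then have "0 < x" using x by linarith
      then show "x \<in> bin \<alpha> \<beta>" using x a0 b0 by (auto simp: bin_def field_simps)
    qed
    then have "(\<integral>\<^sup>+u. ennreal (1 / u\<^sup>2) * indicator {\<tau><..} u * indicator (bin \<alpha> \<beta>) u \<partial>lborel)
        = (\<integral>\<^sup>+u. ennreal (1 / u\<^sup>2) * indicator {1/\<beta><..1/\<alpha>} u \<partial>lborel)"
      using tb by (intro nn_integral_cong) (auto split: split_indicator)
    also have "\<dots> = ennreal (1 / (1 / \<beta>) - 1 / (1 / \<alpha>))"
      using a0 b0 assms by (intro interval_int) (auto simp: field_simps)
    also have "\<dots> = ennreal (\<beta> - \<alpha>)" by simp
    finally show ?thesis .
  qed
qed

lemma storm_Q: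
  assumes "0 < \<tau>" "0 \<le> \<alpha>" "\<alpha> < \<beta>" "\<beta> * \<tau> \<le> 1" "a1 \<le> b1" "a2 \<le> b2"
  shows "emeasure (storm_intensity \<tau>) (rbox a1 b1 a2 b2 \<times> bin \<alpha> \<beta>) = ennreal ((b1 - a1) * (b2 - a2) * (\<beta> - \<alpha>))"
proof -
  have "emeasure (storm_intensity \<tau>) (rbox a1 b1 a2 b2 \<times> bin \<alpha> \<beta>)
      = (\<integral>\<^sup>+x. \<integral>\<^sup>+u. ennreal (1 / u\<^sup>2) * indicator {\<tau><..} u * indicator (rbox a1 b1 a2 b2 \<times> bin \<alpha> \<beta>) (x, u) \<partial>lborel \<partial>lborel)"
    using assms by (intro storm_emeasure) auto
  also have "\<dots> = (\<integral>\<^sup>+x. indicator (rbox a1 b1 a2 b2) x * ennreal (\<beta> - \<alpha>) \<partial>lborel)"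
  proof (rule nn_integral_cong)
    fix x :: "real^2"
    have "(\<integral>\<^sup>+u. ennreal (1 / u\<^sup>2) * indicator {\<tau><..} u * indicator (rbox a1 b1 a2 b2 \<times> bin \<alpha> \<beta>) (x, u) \<partial>lborel)
        = (\<integral>\<^sup>+u. indicator (rbox a1 b1 a2 b2) x * (ennreal (1 / u\<^sup>2) * indicator {\<tau><..} u * indicator (bin \<alpha> \<beta>) u) \<partial>lborel)"
      by (intro nn_integral_cong) (auto split: split_indicator)
    also have "\<dots> = indicator (rbox a1 b1 a2 b2) x * ennreal (\<beta> - \<alpha>)"
      using assms by (subst nn_integral_cmult) (auto simp: bin_int)
    finally show "(\<integral>\<^sup>+u. ennreal (1 / u\<^sup>2) * indicator {\<tau><..} u * indicator (rbox a1 b1 a2 b2 \<times> bin \<alpha> \<beta>) (x, u) \<partial>lborel)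
        = indicator (rbox a1 b1 a2 b2) x * ennreal (\<beta> - \<alpha>)" .
  qed
  also have "\<dots> = emeasure lborel (rbox a1 b1 a2 b2) * ennreal (\<beta> - \<alpha>)"
    by (subst nn_integral_multc) auto
  also have "\<dots> = ennreal ((b1 - a1) * (b2 - a2) * (\<beta> - \<alpha>))"
    using assms by (simp add: box_area ennreal_mult)
  finally show ?thesis .
qed




lemma inv_Lf: "v / Lf a1 b1 a2 b2 x = v * (exp (- (dI a1 b1 (x$1))\<^sup>2 / 2) * exp (- (dI a2 b2 (x$2))\<^sup>2 / 2))"
  by (simp add: Lf_def exp_minus field_simps)
lemma inv_Hf: "v / Hf a1 b1 a2 b2 x = v * (exp (- (DI a1 b1 (x$1))\<^sup>2 / 2) * exp (- (DI a2 b2 (x$2))\<^sup>2 / 2))"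
  by (simp add: Hf_def exp_minus field_simps)

lemma Lset_sets[measurable]: "{(x, u). Lf a1 b1 a2 b2 x < u * v} \<in> sets (borel \<Otimes>\<^sub>M borel)"
proof -
  have "{(x, u). Lf a1 b1 a2 b2 x < u * v} = {p\<in>space (borel \<Otimes>\<^sub>M borel). Lf a1 b1 a2 b2 (fst p) < snd p * v}"
    by (auto simp: space_pair_measure)
  also have "\<dots> \<in> sets (borel \<Otimes>\<^sub>M borel)" by measurable
  finally show ?thesis .
qed

lemma Hset_sets[measurable]: "{(x, u). x \<notin> rbox a1 b1 a2 b2 \<and> Hf a1 b1 a2 b2 x < u * v} \<in> sets (borel \<Otimes>\<^sub>M borel)"
proof -
  have "{(x, u). x \<notin> rbox a1 b1 a2 b2 \<and> Hf a1 b1 a2 b2 x < u * v}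
      = {p\<in>space (borel \<Otimes>\<^sub>M borel). fst p \<notin> rbox a1 b1 a2 b2 \<and> Hf a1 b1 a2 b2 (fst p) < snd p * v}"
    by (auto simp: space_pair_measure)
  also have "\<dots> \<in> sets (borel \<Otimes>\<^sub>M borel)" by measurable
  finally show ?thesis .
qed

lemma storm_Lset:
  assumes "0 < \<tau>" "0 < v" "a1 \<le> b1" "a2 \<le> b2"
  shows "emeasure (storm_intensity \<tau>) {(x, u). Lf a1 b1 a2 b2 x < u * v}
     \<le> ennreal (v * ((sqrt (2*pi) + (b1 - a1)) * (sqrt (2*pi) + (b2 - a2))))"
proof -
  let ?L = "Lf a1 b1 a2 b2"
  have "emeasure (storm_intensity \<tau>) {(x, u). ?L x < u * v}
      = (\<integral>\<^sup>+x. \<integral>\<^sup>+u. ennreal (1 / u\<^sup>2) * indicator {\<tau><..} u * indicator {(x, u). ?L x < u * v} (x, u) \<partial>lborel \<partial>lborel)"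
    using assms by (intro storm_emeasure) auto
  also have "\<dots> \<le> (\<integral>\<^sup>+x. ennreal (v / ?L x) \<partial>lborel)"
  proof (rule nn_integral_mono)
    fix x
    have "(\<integral>\<^sup>+u. ennreal (1 / u\<^sup>2) * indicator {\<tau><..} u * indicator {(x, u). ?L x < u * v} (x, u) \<partial>lborel)
        \<le> (\<integral>\<^sup>+u. ennreal (1 / u\<^sup>2) * indicator {?L x / v<..} u \<partial>lborel)"
      using assms by (intro nn_integral_mono) (auto split: split_indicator simp: field_simps)
    also have "\<dots> = ennreal (1 / (?L x / v))"
      using assms Lf_pos by (intro tail_int) auto
    finally show "(\<integral>\<^sup>+u. ennreal (1 / u\<^sup>2) * indicator {\<tau><..} u * indicator {(x, u). ?L x < u * v} (x, u) \<partial>lborel)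
        \<le> ennreal (v / ?L x)" by simp
  qed
  also have "\<dots> = (\<integral>\<^sup>+x. ennreal v * ennreal (exp (- (dI a1 b1 ((x::real^2)$1))\<^sup>2 / 2) * exp (- (dI a2 b2 (x$2))\<^sup>2 / 2)) \<partial>lborel)"
    using assms by (intro nn_integral_cong) (simp add: inv_Lf ennreal_mult)
  also have "\<dots> = ennreal v * ((\<integral>\<^sup>+t. ennreal (exp (- (dI a1 b1 t)\<^sup>2 / 2)) \<partial>lborel) * (\<integral>\<^sup>+t. ennreal (exp (- (dI a2 b2 t)\<^sup>2 / 2)) \<partial>lborel))"
  proof -
    have "(\<integral>\<^sup>+x. ennreal (exp (- (dI a1 b1 ((x::real^2)$1))\<^sup>2 / 2) * exp (- (dI a2 b2 (x$2))\<^sup>2 / 2)) \<partial>lborel)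
      = (\<integral>\<^sup>+t. ennreal (exp (- (dI a1 b1 t)\<^sup>2 / 2)) \<partial>lborel) * (\<integral>\<^sup>+t. ennreal (exp (- (dI a2 b2 t)\<^sup>2 / 2)) \<partial>lborel)"
      by (rule nn_integral_vec2) auto
    then show ?thesis by (subst nn_integral_cmult) auto
  qed
  also have "\<dots> \<le> ennreal v * (ennreal (sqrt (2*pi) + (b1 - a1)) * ennreal (sqrt (2*pi) + (b2 - a2)))"
    using assms by (intro mult_left_mono mult_mono gauss_dI) auto
  also have "\<dots> = ennreal (v * ((sqrt (2*pi) + (b1 - a1)) * (sqrt (2*pi) + (b2 - a2))))"
    using assms by (simp add: ennreal_mult)
  finally show ?thesis .
qed

lemma storm_Hset:
  assumes "0 < \<tau>" "0 < v" "v * \<tau> \<le> 1" "a1 \<le> b1" "a2 \<le> b2"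
    "2 * (b1 - a1) \<le> sqrt (2*pi)" "2 * (b2 - a2) \<le> sqrt (2*pi)"
  shows "ennreal (v * ((sqrt (2*pi) - 2 * (b1 - a1)) * (sqrt (2*pi) - 2 * (b2 - a2)) - (b1 - a1) * (b2 - a2)))
     \<le> emeasure (storm_intensity \<tau>) {(x, u). x \<notin> rbox a1 b1 a2 b2 \<and> Hf a1 b1 a2 b2 x < u * v}"
proof -
  let ?H = "Hf a1 b1 a2 b2" and ?B = "rbox a1 b1 a2 b2"
  define J where "J = (\<integral>\<^sup>+x. indicator (- ?B) x * ennreal (v / ?H x) \<partial>lborel)"
  have eq: "emeasure (storm_intensity \<tau>) {(x, u). x \<notin> ?B \<and> ?H x < u * v} = J"
  proof -
    have "emeasure (storm_intensity \<tau>) {(x, u). x \<notin> ?B \<and> ?H x < u * v}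
      = (\<integral>\<^sup>+x. \<integral>\<^sup>+u. ennreal (1 / u\<^sup>2) * indicator {\<tau><..} u * indicator {(x, u). x \<notin> ?B \<and> ?H x < u * v} (x, u) \<partial>lborel \<partial>lborel)"
      using assms by (intro storm_emeasure) auto
    also have "\<dots> = J" unfolding J_def
    proof (rule nn_integral_cong)
      fix x
      have t: "\<tau> \<le> ?H x / v"
      proof -
        have "\<tau> \<le> 1 / v" using assms by (simp add: field_simps)
        also have "\<dots> \<le> ?H x / v" using Hf_ge1 assms by (simp add: divide_right_mono)
        finally show ?thesis .
      qed
      have "(\<integral>\<^sup>+u. ennreal (1 / u\<^sup>2) * indicator {\<tau><..} u * indicator {(x, u). x \<notin> ?B \<and> ?H x < u * v} (x, u) \<partial>lborel)
          = (\<integral>\<^sup>+u. indicator (- ?B) x * (ennreal (1 / u\<^sup>2) * indicator {?H x / v<..} u) \<partial>lborel)"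
      proof (intro nn_integral_cong)
        fix u
        have k: "\<tau> < u" if "?H x < u * v"
        proof -
          have "\<tau> * v \<le> ?H x" using t assms by (simp add: field_simps)
          then have "\<tau> * v < u * v" using that by linarith
          then show ?thesis using assms by simp
        qed
        have k2: "?H x < u * v \<longleftrightarrow> ?H x / v < u" using assms by (simp add: field_simps)
        show "ennreal (1 / u\<^sup>2) * indicator {\<tau><..} u * indicator {(x, u). x \<notin> ?B \<and> ?H x < u * v} (x, u)
          = indicator (- ?B) x * (ennreal (1 / u\<^sup>2) * indicator {?H x / v<..} u)"
          using k k2 by (auto split: split_indicator)
      qed
      also have "\<dots> = indicator (- ?B) x * ennreal (1 / (?H x / v))"
        using assms Hf_ge1[of a1 b1 a2 b2 x] by (subst nn_integral_cmult) (auto simp: tail_int)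
      finally show "(\<integral>\<^sup>+u. ennreal (1 / u\<^sup>2) * indicator {\<tau><..} u * indicator {(x, u). x \<notin> ?B \<and> ?H x < u * v} (x, u) \<partial>lborel)
          = indicator (- ?B) x * ennreal (v / ?H x)" by simp
    qed
    finally show ?thesis .
  qed
  have T1: "ennreal (v * ((sqrt (2*pi) - 2 * (b1 - a1)) * (sqrt (2*pi) - 2 * (b2 - a2))))
      \<le> (\<integral>\<^sup>+x. ennreal (v / ?H x) \<partial>lborel)"
  proof -
    have "ennreal (v * ((sqrt (2*pi) - 2 * (b1 - a1)) * (sqrt (2*pi) - 2 * (b2 - a2))))
        = ennreal v * (ennreal (sqrt (2*pi) - 2 * (b1 - a1)) * ennreal (sqrt (2*pi) - 2 * (b2 - a2)))"
      using assms by (simp add: ennreal_mult)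
    also have "\<dots> \<le> ennreal v * ((\<integral>\<^sup>+t. ennreal (exp (- (DI a1 b1 t)\<^sup>2 / 2)) \<partial>lborel) * (\<integral>\<^sup>+t. ennreal (exp (- (DI a2 b2 t)\<^sup>2 / 2)) \<partial>lborel))"
      using assms by (intro mult_left_mono mult_mono gauss_DI) auto
    also have "\<dots> = (\<integral>\<^sup>+x. ennreal v * ennreal (exp (- (DI a1 b1 ((x::real^2)$1))\<^sup>2 / 2) * exp (- (DI a2 b2 (x$2))\<^sup>2 / 2)) \<partial>lborel)"
    proof -
      have "(\<integral>\<^sup>+x. ennreal (exp (- (DI a1 b1 ((x::real^2)$1))\<^sup>2 / 2) * exp (- (DI a2 b2 (x$2))\<^sup>2 / 2)) \<partial>lborel)
        = (\<integral>\<^sup>+t. ennreal (exp (- (DI a1 b1 t)\<^sup>2 / 2)) \<partial>lborel) * (\<integral>\<^sup>+t. ennreal (exp (- (DI a2 b2 t)\<^sup>2 / 2)) \<partial>lborel)"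
        by (rule nn_integral_vec2) auto
      then show ?thesis by (subst nn_integral_cmult) auto
    qed
    also have "\<dots> = (\<integral>\<^sup>+x. ennreal (v / ?H x) \<partial>lborel)"
      using assms by (intro nn_integral_cong) (simp add: inv_Hf ennreal_mult)
    finally show ?thesis .
  qed
  have T2: "(\<integral>\<^sup>+x. ennreal (v / ?H x) \<partial>lborel) \<le> ennreal (v * ((b1 - a1) * (b2 - a2))) + J"
  proof -
    have "(\<integral>\<^sup>+x. ennreal (v / ?H x) \<partial>lborel)
        = (\<integral>\<^sup>+x. indicator ?B x * ennreal (v / ?H x) + indicator (- ?B) x * ennreal (v / ?H x) \<partial>lborel)"
      by (intro nn_integral_cong) (auto split: split_indicator)
    also have "\<dots> = (\<integral>\<^sup>+x. indicator ?B x * ennreal (v / ?H x) \<partial>lborel) + J"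
      unfolding J_def by (subst nn_integral_add) auto
    also have "(\<integral>\<^sup>+x. indicator ?B x * ennreal (v / ?H x) \<partial>lborel) \<le> (\<integral>\<^sup>+x. ennreal v * indicator ?B x \<partial>lborel)"
    proof (rule nn_integral_mono)
      fix x
      have "v / ?H x \<le> v" using Hf_ge1[of a1 b1 a2 b2 x] assms
        by (simp add: divide_le_eq)
      then show "indicator ?B x * ennreal (v / ?H x) \<le> ennreal v * indicator ?B x"
        by (auto split: split_indicator intro: ennreal_leI)
    qed
    also have "\<dots> = ennreal v * emeasure lborel ?B"
      by (subst nn_integral_cmult) auto
    also have "\<dots> = ennreal (v * ((b1 - a1) * (b2 - a2)))"
      using assms by (simp add: box_area ennreal_mult)
    finally show ?thesis by (simp add: add_right_mono)
  qed
  have "ennreal (v * ((sqrt (2*pi) - 2 * (b1 - a1)) * (sqrt (2*pi) - 2 * (b2 - a2))))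
      \<le> ennreal (v * ((b1 - a1) * (b2 - a2))) + J"
    using T1 T2 by (rule order_trans)
  then have "ennreal (v * ((sqrt (2*pi) - 2 * (b1 - a1)) * (sqrt (2*pi) - 2 * (b2 - a2))) - v * ((b1 - a1) * (b2 - a2))) \<le> J"
    using assms by (subst ennreal_minus[symmetric]) (auto simp: ennreal_minus_le_iff add.commute)
  then show ?thesis using eq by (simp add: algebra_simps)
qed




lemma poisson_sum: "(\<lambda>i. real i * m ^ i / fact i) sums (m * exp m)"
proof -
  have "(\<lambda>n. m * (m ^ n / fact n)) sums (m * exp m)"
    using sums_mult[OF exp_converges[of m], of m] by (simp add: divide_inverse scaleR_conv_of_real mult.commute)
  moreover have "real (Suc n) * m ^ Suc n / fact (Suc n) = m * (m ^ n / fact n)" for n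
  proof -
    have "fact (Suc n) = real (Suc n) * (fact n :: real)" by (simp add: fact_Suc)
    then show ?thesis by (simp del: of_nat_Suc)
  qed
  ultimately have "(\<lambda>n. (\<lambda>i. real i * m ^ i / fact i) (Suc n)) sums (m * exp m)"
    by (simp only:)
  then have "(\<lambda>i. real i * m ^ i / fact i) sums (m * exp m + real 0 * m ^ 0 / fact 0)"
    by (rule sums_Suc_iff[THEN iffD1])
  then show ?thesis by simp
qed

locale PPx =
  fixes M :: "'w measure" and P :: "'w \<Rightarrow> ((real^2) \<times> real) set" and \<tau> :: real
  assumes tau: "0 < \<tau>" and pp: "poisson_process M P (storm_intensity \<tau>)"
begin

sublocale prob_space M using pp by (simp add: poisson_process_def)

abbreviation "N \<equiv> storm_intensity \<tau>"

lemma finite_AE: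
  assumes "A \<in> sets N" "emeasure N A < \<infinity>"
  shows "AE \<omega> in M. finite (P \<omega> \<inter> A)"
  using pp assms by (simp add: poisson_process_def)

lemma cnt_sets:
  assumes "A \<in> sets N" "emeasure N A < \<infinity>"
  shows "{\<omega>\<in>space M. card (P \<omega> \<inter> A) = k} \<in> sets M"
  using pp assms by (simp add: poisson_process_def)

lemma cnt_prob:
  assumes "A \<in> sets N" "emeasure N A < \<infinity>"
  shows "prob {\<omega>\<in>space M. card (P \<omega> \<inter> A) = k} = measure N A ^ k / fact k * exp (- measure N A)"
  using pp assms by (simp add: poisson_process_def)

lemma cnt_indep:
  assumes A: "A \<in> sets N" "emeasure N A < \<infinity>" and D: "D \<in> sets N" "emeasure N D < \<infinity>"
    and disj: "A \<inter> D = {}"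
  shows "prob {\<omega>\<in>space M. card (P \<omega> \<inter> A) = i \<and> card (P \<omega> \<inter> D) = j}
       = prob {\<omega>\<in>space M. card (P \<omega> \<inter> A) = i} * prob {\<omega>\<in>space M. card (P \<omega> \<inter> D) = j}"
proof -
  define F where "F n = (if n = (0::nat) then A else D)" for n
  define k where "k n = (if n = (0::nat) then i else j)" for n
  have ind: "indep_vars (\<lambda>_. count_space UNIV) (\<lambda>n \<omega>. card (P \<omega> \<inter> F n)) {0, 1}"
  proof -
    have H: "\<forall>I (A :: nat \<Rightarrow> _ set). finite I \<longrightarrow> (\<forall>i\<in>I. A i \<in> sets N \<and> emeasure N (A i) < \<infinity>)
        \<longrightarrow> disjoint_family_on A I
        \<longrightarrow> indep_vars (\<lambda>_. count_space UNIV) (\<lambda>i \<omega>. card (P \<omega> \<inter> A i)) I"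
      using pp unfolding poisson_process_def by blast
    have d: "disjoint_family_on F {0, 1}"
      using disj by (auto simp: disjoint_family_on_def F_def)
    have f: "\<And>i. i\<in>{0,1} \<Longrightarrow> F i \<in> sets N \<and> emeasure N (F i) < \<infinity>"
      using A D by (auto simp: F_def)
    show ?thesis using H[rule_format, OF _ f d] by simp
  qed
  have "prob (\<Inter>n\<in>{0,1}. (\<lambda>\<omega>. card (P \<omega> \<inter> F n)) -` {k n} \<inter> space M)
      = (\<Prod>n\<in>{0,1}. prob ((\<lambda>\<omega>. card (P \<omega> \<inter> F n)) -` {k n} \<inter> space M))"
    by (rule indep_varsD[OF ind]) auto
  moreover have "(\<Inter>n\<in>{0,1}. (\<lambda>\<omega>. card (P \<omega> \<inter> F n)) -` {k n} \<inter> space M)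
      = {\<omega>\<in>space M. card (P \<omega> \<inter> A) = i \<and> card (P \<omega> \<inter> D) = j}"
    by (auto simp: F_def k_def)
  moreover have "(\<Prod>n\<in>{0::nat,1}. prob ((\<lambda>\<omega>. card (P \<omega> \<inter> F n)) -` {k n} \<inter> space M))
      = prob {\<omega>\<in>space M. card (P \<omega> \<inter> A) = i} * prob {\<omega>\<in>space M. card (P \<omega> \<inter> D) = j}"
    by (simp add: F_def k_def vimage_def Int_def conj_commute)
  ultimately show ?thesis by simp
qed

lemma prob_E:
  assumes A: "A \<in> sets N" "emeasure N A < \<infinity>" and D: "D \<in> sets N" "emeasure N D < \<infinity>"
    and disj: "A \<inter> D = {}"
  shows "prob {\<omega>\<in>space M. card (P \<omega> \<inter> A) = 1 \<and> card (P \<omega> \<inter> D) = 0}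
       = measure N A * exp (- measure N A) * exp (- measure N D)"
  using cnt_indep[OF A D disj, of 1 0] cnt_prob[OF A, of 1] cnt_prob[OF D, of 0] by simp

lemma expect_AD:
  assumes A: "A \<in> sets N" "emeasure N A < \<infinity>" and D: "D \<in> sets N" "emeasure N D < \<infinity>"
    and disj: "A \<inter> D = {}"
  shows "(\<integral>\<^sup>+\<omega>. of_nat (card (P \<omega> \<inter> A)) * indicator {\<omega>\<in>space M. card (P \<omega> \<inter> D) = 0} \<omega> \<partial>M)
       = ennreal (measure N A * exp (- measure N D))"
proof -
  define m where "m = measure N A"
  define \<mu> where "\<mu> = measure N D"
  define E where "E i = {\<omega>\<in>space M. card (P \<omega> \<inter> A) = i \<and> card (P \<omega> \<inter> D) = 0}" for i
  have Esets: "E i \<in> sets M" for i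
  proof -
    have "E i = {\<omega>\<in>space M. card (P \<omega> \<inter> A) = i} \<inter> {\<omega>\<in>space M. card (P \<omega> \<inter> D) = 0}"
      by (auto simp: E_def)
    then show ?thesis using cnt_sets[OF A] cnt_sets[OF D] by auto
  qed
  have "(\<integral>\<^sup>+\<omega>. of_nat (card (P \<omega> \<inter> A)) * indicator {\<omega>\<in>space M. card (P \<omega> \<inter> D) = 0} \<omega> \<partial>M)
      = (\<integral>\<^sup>+\<omega>. (\<Sum>i. of_nat i * indicator (E i) \<omega>) \<partial>M)"
  proof (rule nn_integral_cong)
    fix \<omega> assume "\<omega> \<in> space M"
    have "(\<lambda>i. of_nat i * indicator (E i) \<omega> :: ennreal)
        = (\<lambda>i. if i = card (P \<omega> \<inter> A) then of_nat (card (P \<omega> \<inter> A)) * indicator {\<omega>\<in>space M. card (P \<omega> \<inter> D) = 0} \<omega> else 0)"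
      using \<open>\<omega> \<in> space M\<close> by (auto simp: E_def split: split_indicator)
    then show "of_nat (card (P \<omega> \<inter> A)) * indicator {\<omega>\<in>space M. card (P \<omega> \<inter> D) = 0} \<omega>
        = (\<Sum>i. of_nat i * indicator (E i) \<omega> :: ennreal)"
      using sums_unique[OF sums_single[of "card (P \<omega> \<inter> A)" "\<lambda>_. of_nat (card (P \<omega> \<inter> A)) * indicator {\<omega>\<in>space M. card (P \<omega> \<inter> D) = 0} \<omega> :: ennreal"]]
      by simp
  qed
  also have "\<dots> = (\<Sum>i. (\<integral>\<^sup>+\<omega>. of_nat i * indicator (E i) \<omega> \<partial>M))"
    by (rule nn_integral_suminf) (use Esets in auto)
  also have "\<dots> = (\<Sum>i. ennreal (real i * m ^ i / fact i * exp (- m) * exp (- \<mu>)))"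
  proof (rule suminf_cong)
    fix i
    have "(\<integral>\<^sup>+\<omega>. of_nat i * indicator (E i) \<omega> \<partial>M) = of_nat i * emeasure M (E i)"
      using Esets by (simp add: nn_integral_cmult_indicator)
    also have "\<dots> = of_nat i * ennreal (prob (E i))" by (simp add: emeasure_eq_measure)
    also have "prob (E i) = m ^ i / fact i * exp (- m) * exp (- \<mu>)"
      using cnt_indep[OF A D disj, of i 0] cnt_prob[OF A, of i] cnt_prob[OF D, of 0]
      by (simp add: E_def m_def \<mu>_def)
    also have "of_nat i * ennreal (m ^ i / fact i * exp (- m) * exp (- \<mu>))
        = ennreal (real i * (m ^ i / fact i * exp (- m) * exp (- \<mu>)))"
      by (subst ennreal_mult) (auto simp: m_def ennreal_of_nat_eq_real_of_nat)
    finally show "(\<integral>\<^sup>+\<omega>. of_nat i * indicator (E i) \<omega> \<partial>M) = ennreal (real i * m ^ i / fact i * exp (- m) * exp (- \<mu>))"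
      by (simp add: mult.assoc)
  qed
  also have "\<dots> = ennreal (\<Sum>i. real i * m ^ i / fact i * exp (- m) * exp (- \<mu>))"
  proof (rule suminf_ennreal2)
    show "0 \<le> real i * m ^ i / fact i * exp (- m) * exp (- \<mu>)" for i
      by (simp add: m_def)
    show "summable (\<lambda>i. real i * m ^ i / fact i * exp (- m) * exp (- \<mu>))"
      using sums_mult2[OF poisson_sum[of m], of "exp (- m) * exp (- \<mu>)"]
      by (simp add: sums_iff mult.assoc)
  qed
  also have "(\<Sum>i. real i * m ^ i / fact i * exp (- m) * exp (- \<mu>)) = m * exp (- \<mu>)"
  proof -
    have "(\<lambda>i. real i * m ^ i / fact i * exp (- m) * exp (- \<mu>)) sums (m * exp m * (exp (- m) * exp (- \<mu>)))"
      using sums_mult2[OF poisson_sum[of m], of "exp (- m) * exp (- \<mu>)"] by (simp add: mult.assoc)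
    then show ?thesis by (simp add: sums_iff exp_minus field_simps)
  qed
  finally show ?thesis by (simp add: m_def \<mu>_def)
qed

end




lemma phi0: "phi 0 = 1 / (2 * pi)" by (simp add: phi_def)

lemma dom_iff: "u * phi 0 < u' * phi (\<xi> - \<xi>') \<longleftrightarrow> u * exp ((norm (\<xi> - \<xi>'))\<^sup>2 / 2) < u'"
proof -
  define r where "r = (norm (\<xi> - \<xi>'))\<^sup>2 / 2"
  have "u * phi 0 < u' * phi (\<xi> - \<xi>') \<longleftrightarrow> u < u' * exp (- r)"
    by (simp add: phi_def r_def divide_less_cancel field_simps)
  also have "\<dots> \<longleftrightarrow> u * exp r < u' * exp (- r) * exp r"
    by simp
  also have "u' * exp (- r) * exp r = u'" by (simp add: exp_minus field_simps)
  finally show ?thesis by (simp add: r_def)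
qed

lemma dI_sq_le: "a \<le> s \<Longrightarrow> s \<le> b \<Longrightarrow> (dI a b t)\<^sup>2 \<le> (s - t)\<^sup>2"
proof -
  assume "a \<le> s" "s \<le> b"
  then have "dI a b t \<le> \<bar>s - t\<bar>" unfolding dI_def by auto
  then have "(dI a b t)\<^sup>2 \<le> \<bar>s - t\<bar>\<^sup>2" by (rule power_mono) (simp add: dI_def)
  then show ?thesis by simp
qed

lemma DI_sq_ge: "a \<le> s \<Longrightarrow> s \<le> b \<Longrightarrow> (s - t)\<^sup>2 \<le> (DI a b t)\<^sup>2"
proof -
  assume "a \<le> s" "s \<le> b"
  then have "\<bar>s - t\<bar> \<le> DI a b t" unfolding DI_def by auto
  then have "\<bar>s - t\<bar>\<^sup>2 \<le> (DI a b t)\<^sup>2" by (rule power_mono) simp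
  then show ?thesis by simp
qed

lemma norm_diff_sq: "(norm ((\<xi>::real^2) - \<xi>'))\<^sup>2 = (\<xi>$1 - \<xi>'$1)\<^sup>2 + (\<xi>$2 - \<xi>'$2)\<^sup>2"
  by (simp add: norm_vec2_sq)

lemma Lf_le_dist: "\<xi> \<in> rbox a1 b1 a2 b2 \<Longrightarrow> Lf a1 b1 a2 b2 \<xi>' \<le> exp ((norm (\<xi> - \<xi>'))\<^sup>2 / 2)"
  unfolding Lf_def norm_diff_sq exp_add[symmetric] rbox_def
  using dI_sq_le[of a1 "\<xi>$1" b1 "\<xi>'$1"] dI_sq_le[of a2 "\<xi>$2" b2 "\<xi>'$2"] by auto

lemma Hf_ge_dist: "\<xi> \<in> rbox a1 b1 a2 b2 \<Longrightarrow> exp ((norm (\<xi> - \<xi>'))\<^sup>2 / 2) \<le> Hf a1 b1 a2 b2 \<xi>'"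
  unfolding Hf_def norm_diff_sq exp_add[symmetric] rbox_def
  using DI_sq_ge[of a1 "\<xi>$1" b1 "\<xi>'$1"] DI_sq_ge[of a2 "\<xi>$2" b2 "\<xi>'$2"] by auto

lemma Lf_in: "\<xi> \<in> rbox a1 b1 a2 b2 \<Longrightarrow> Lf a1 b1 a2 b2 \<xi> = 1"
  unfolding Lf_def rbox_def dI_def by auto

lemma Lf_le_Hf: "Lf a1 b1 a2 b2 x \<le> Hf a1 b1 a2 b2 x"
proof -
  have "(dI a b t)\<^sup>2 \<le> (DI a b t)\<^sup>2" for a b t
    unfolding dI_def DI_def by (rule power_mono) auto
  then show ?thesis unfolding Lf_def Hf_def exp_add[symmetric] by (simp add: add_mono)
qed

definition Qs :: "real \<Rightarrow> real \<Rightarrow> real \<Rightarrow> real \<Rightarrow> real \<Rightarrow> nat \<Rightarrow> ((real^2) \<times> real) set" where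
  "Qs a1 b1 a2 b2 \<Delta> j = rbox a1 b1 a2 b2 \<times> bin (real j * \<Delta>) ((real j + 1) * \<Delta>)"
definition Dps :: "real \<Rightarrow> real \<Rightarrow> real \<Rightarrow> real \<Rightarrow> real \<Rightarrow> nat \<Rightarrow> ((real^2) \<times> real) set" where
  "Dps a1 b1 a2 b2 \<Delta> j = {(x, u). Lf a1 b1 a2 b2 x < u * ((real j + 1) * \<Delta>)} - Qs a1 b1 a2 b2 \<Delta> j"
definition Dms :: "real \<Rightarrow> real \<Rightarrow> real \<Rightarrow> real \<Rightarrow> real \<Rightarrow> nat \<Rightarrow> ((real^2) \<times> real) set" where
  "Dms a1 b1 a2 b2 \<Delta> j = {(x, u). x \<notin> rbox a1 b1 a2 b2 \<and> Hf a1 b1 a2 b2 x < u * (real j * \<Delta>)}"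

lemma Qs_mem: "(\<xi>, u) \<in> Qs a1 b1 a2 b2 \<Delta> j \<longleftrightarrow>
   \<xi> \<in> rbox a1 b1 a2 b2 \<and> 0 < u \<and> real j * \<Delta> \<le> 1 / u \<and> 1 / u < (real j + 1) * \<Delta>"
  by (simp add: Qs_def bin_def)

lemma Qs_disj: "0 < \<Delta> \<Longrightarrow> i \<noteq> j \<Longrightarrow> Qs a1 b1 a2 b2 \<Delta> i \<inter> Qs a1 b1 a2 b2 \<Delta> j = {}"
proof (rule ccontr)
  assume D: "0 < \<Delta>" "i \<noteq> j" "Qs a1 b1 a2 b2 \<Delta> i \<inter> Qs a1 b1 a2 b2 \<Delta> j \<noteq> {}"
  then obtain \<xi> u where "(\<xi>, u) \<in> Qs a1 b1 a2 b2 \<Delta> i" "(\<xi>, u) \<in> Qs a1 b1 a2 b2 \<Delta> j" by auto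
  then have h: "real i * \<Delta> \<le> 1 / u" "1 / u < (real i + 1) * \<Delta>" "real j * \<Delta> \<le> 1 / u" "1 / u < (real j + 1) * \<Delta>"
    by (auto simp: Qs_mem)
  then have "real i < real j + 1" "real j < real i + 1"
    using D(1) by (smt (verit, best) mult_right_mono)+
  then show False using D(2) by linarith
qed

lemma lower_comb:
  fixes S :: "((real^2) \<times> real) set"
  assumes \<Delta>: "0 < \<Delta>" and J: "finite J"
    and E: "\<And>j. j \<in> J \<Longrightarrow> card (S \<inter> Qs a1 b1 a2 b2 \<Delta> j) = 1 \<and> card (S \<inter> Dps a1 b1 a2 b2 \<Delta> j) = 0
                \<and> finite (S \<inter> Dps a1 b1 a2 b2 \<Delta> j)"
  shows "of_nat (card J) \<le> ecard (visible S \<inter> rbox a1 b1 a2 b2)"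
proof -
  let ?B = "rbox a1 b1 a2 b2" and ?Q = "Qs a1 b1 a2 b2 \<Delta>" and ?D = "Dps a1 b1 a2 b2 \<Delta>"
  have "\<forall>j\<in>J. \<exists>p. S \<inter> ?Q j = {p}"
    using E by (metis card_1_singletonE)
  then obtain pt where pt: "\<And>j. j \<in> J \<Longrightarrow> S \<inter> ?Q j = {pt j}" by metis
  have Dempty: "S \<inter> ?D j = {}" if "j \<in> J" for j
    using E[OF that] by auto
  have ptQ: "pt j \<in> S" "pt j \<in> ?Q j" if "j \<in> J" for j
    using pt[OF that] by auto
  have Lreg: "p = pt j" if "j \<in> J" "p \<in> S" "Lf a1 b1 a2 b2 (fst p) < snd p * ((real j + 1) * \<Delta>)" for j p
  proof (rule ccontr)
    assume ne: "p \<noteq> pt j"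
    then have "p \<notin> ?Q j" using pt[OF that(1)] that(2) by auto
    then have "p \<in> S \<inter> ?D j" using that by (cases p) (auto simp: Dps_def)
    then show False using Dempty[OF that(1)] by auto
  qed
  have ptbig: "1 < snd (pt j) * ((real j + 1) * \<Delta>)" "0 < snd (pt j)" "fst (pt j) \<in> ?B" if "j \<in> J" for j
  proof -
    obtain \<xi> u where p: "pt j = (\<xi>, u)" by (cases "pt j")
    with ptQ(2)[OF that] have "\<xi> \<in> ?B" "0 < u" "1 / u < (real j + 1) * \<Delta>" by (auto simp: Qs_mem)
    then show "1 < snd (pt j) * ((real j + 1) * \<Delta>)" "0 < snd (pt j)" "fst (pt j) \<in> ?B"
      using p by (auto simp: field_simps)
  qed
  have vis: "fst (pt j) \<in> visible S" if "j \<in> J" for j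
  proof -
    obtain \<xi> u where p: "pt j = (\<xi>, u)" by (cases "pt j")
    have "\<not> (\<exists>\<xi>' u'. (\<xi>', u') \<in> S \<and> \<xi>' \<noteq> \<xi> \<and> u' * phi (\<xi> - \<xi>') > u * phi 0)"
    proof
      assume "\<exists>\<xi>' u'. (\<xi>', u') \<in> S \<and> \<xi>' \<noteq> \<xi> \<and> u' * phi (\<xi> - \<xi>') > u * phi 0"
      then obtain \<xi>' u' where q: "(\<xi>', u') \<in> S" "\<xi>' \<noteq> \<xi>" "u * exp ((norm (\<xi> - \<xi>'))\<^sup>2 / 2) < u'"
        by (auto simp: dom_iff)
      define E where "E = exp ((norm (\<xi> - \<xi>'))\<^sup>2 / 2)"
      define v where "v = (real j + 1) * \<Delta>"
      have v: "0 < v" using \<Delta> by (simp add: v_def)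
      have uv: "1 < u * v" using ptbig(1)[OF that] p by (simp add: v_def)
      have LE: "Lf a1 b1 a2 b2 \<xi>' \<le> E" using Lf_le_dist ptbig(3)[OF that] p by (simp add: E_def)
      have E0: "0 < E" by (simp add: E_def)
      have "u * E * v < u' * v" using q(3) v by (simp add: E_def)
      moreover have "E < E * (u * v)" using uv E0 by simp
      ultimately have "Lf a1 b1 a2 b2 \<xi>' < u' * v" using LE by (simp add: algebra_simps)
      then have "(\<xi>', u') = pt j" using Lreg[OF that q(1)] by (simp add: v_def)
      then show False using p q(2) by simp
    qed
    moreover have "(\<xi>, u) \<in> S" using ptQ(1)[OF that] p by simp
    ultimately show ?thesis using p by (auto simp: visible_def)
  qed
  have inj: "inj_on (fst \<circ> pt) J"
  proof (rule inj_onI)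
    fix i j assume ij: "i \<in> J" "j \<in> J" "(fst \<circ> pt) i = (fst \<circ> pt) j"
    have noless: "\<not> snd (pt j) < snd (pt i)" if "i \<in> J" "j \<in> J" "fst (pt i) = fst (pt j)" for i j
    proof
      assume lt: "snd (pt j) < snd (pt i)"
      have "1 < snd (pt j) * ((real j + 1) * \<Delta>)" by (rule ptbig(1)[OF that(2)])
      also have "\<dots> < snd (pt i) * ((real j + 1) * \<Delta>)" using lt \<Delta> by simp
      finally have "Lf a1 b1 a2 b2 (fst (pt i)) < snd (pt i) * ((real j + 1) * \<Delta>)"
        using Lf_in[OF ptbig(3)[OF that(2)]] that(3) by simp
      then have "pt i = pt j" using Lreg[OF that(2) ptQ(1)[OF that(1)]] by simp
      then show False using lt by simp
    qed
    have "snd (pt i) = snd (pt j)" using noless[of i j] noless[of j i] ij by force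
    then have "pt i = pt j" using ij(3) by (simp add: prod_eq_iff)
    then have "pt i \<in> ?Q i \<inter> ?Q j" using ptQ(2)[OF ij(1)] ptQ(2)[OF ij(2)] by auto
    then show "i = j" using Qs_disj[OF \<Delta>] by blast
  qed
  have sub: "(fst \<circ> pt) ` J \<subseteq> visible S \<inter> ?B" using vis ptbig(3) by auto
  show ?thesis
  proof (cases "finite (visible S \<inter> ?B)")
    case True
    have "card J = card ((fst \<circ> pt) ` J)" using inj by (rule card_image[symmetric])
    also have "\<dots> \<le> card (visible S \<inter> ?B)" using True sub by (rule card_mono)
    finally show ?thesis using True by (simp add: ecard_def)
  next
    case False
    then show ?thesis by (simp add: ecard_def)
  qed
qed




lemma upper_comb:
  fixes S :: "((real^2) \<times> real) set"
  assumes \<tau>: "0 < \<tau>" and K: "1 \<le> K" and \<Delta>: "\<Delta> = 1 / (\<tau> * real K)"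
    and X0: "S \<inter> (rbox a1 b1 a2 b2 \<times> {..\<tau>}) = {}"
    and fin: "\<And>j. j < K \<Longrightarrow> finite (S \<inter> Qs a1 b1 a2 b2 \<Delta> j)"
  shows "ecard (visible S \<inter> rbox a1 b1 a2 b2)
     \<le> (\<Sum>j<K. of_nat (card (S \<inter> Qs a1 b1 a2 b2 \<Delta> j)) * (if S \<inter> Dms a1 b1 a2 b2 \<Delta> j = {} then 1 else 0))"
proof -
  let ?B = "rbox a1 b1 a2 b2" and ?Q = "Qs a1 b1 a2 b2 \<Delta>" and ?D = "Dms a1 b1 a2 b2 \<Delta>"
  define I where "I = {j. j < K \<and> S \<inter> ?D j = {}}"
  have D0: "0 < \<Delta>" using \<tau> K by (simp add: \<Delta>)
  have KD: "real K * \<Delta> = 1 / \<tau>" using \<tau> K by (simp add: \<Delta>)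
  have sub: "visible S \<inter> ?B \<subseteq> (\<Union>j\<in>I. fst ` (S \<inter> ?Q j))"
  proof
    fix \<xi> assume "\<xi> \<in> visible S \<inter> ?B"
    then obtain u where \<xi>B: "\<xi> \<in> ?B" and uS: "(\<xi>, u) \<in> S"
      and nd: "\<not> (\<exists>\<xi>' u'. (\<xi>', u') \<in> S \<and> \<xi>' \<noteq> \<xi> \<and> u' * phi (\<xi> - \<xi>') > u * phi 0)"
      by (auto simp: visible_def)
    have ut: "\<tau> < u"
    proof (rule ccontr)
      assume "\<not> \<tau> < u"
      then have "(\<xi>, u) \<in> S \<inter> (?B \<times> {..\<tau>})" using uS \<xi>B by auto
      then show False using X0 by blast
    qed
    then have u0: "0 < u" using \<tau> by linarith
    define x where "x = 1 / (u * \<Delta>)"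
    define j where "j = nat \<lfloor>x\<rfloor>"
    have x0: "0 \<le> x" using u0 D0 by (simp add: x_def)
    have jx: "real j \<le> x" "x < real j + 1" using x0 by (simp_all add: j_def of_nat_nat)
    have xK: "x < real K"
    proof -
      have "1 / u < 1 / \<tau>" using ut \<tau> by (simp add: frac_less2)
      then have "1 / u < real K * \<Delta>" using KD by simp
      then show ?thesis using D0 u0 by (simp add: x_def field_simps)
    qed
    have jK: "j < K" using jx xK by linarith
    have b1: "real j * \<Delta> \<le> 1 / u"
    proof -
      have "real j * \<Delta> \<le> x * \<Delta>" using jx D0 by (simp add: mult_right_mono)
      also have "x * \<Delta> = 1 / u" using D0 by (simp add: x_def)
      finally show ?thesis .
    qed
    have b2: "1 / u < (real j + 1) * \<Delta>"
    proof -
      have "1 / u = x * \<Delta>" using D0 by (simp add: x_def)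
      also have "\<dots> < (real j + 1) * \<Delta>" using jx D0 by simp
      finally show ?thesis .
    qed
    have inQ: "(\<xi>, u) \<in> ?Q j" using \<xi>B u0 b1 b2 by (simp add: Qs_mem)
    have Dempty: "S \<inter> ?D j = {}"
    proof (rule ccontr)
      assume "S \<inter> ?D j \<noteq> {}"
      then obtain \<xi>' u' where q: "(\<xi>', u') \<in> S" "\<xi>' \<notin> ?B" "Hf a1 b1 a2 b2 \<xi>' < u' * (real j * \<Delta>)"
        by (auto simp: Dms_def)
      define E where "E = exp ((norm (\<xi> - \<xi>'))\<^sup>2 / 2)"
      have EH: "E \<le> Hf a1 b1 a2 b2 \<xi>'" using Hf_ge_dist[OF \<xi>B] by (simp add: E_def)
      have E0: "0 < E" by (simp add: E_def)
      have ujD: "u * (real j * \<Delta>) \<le> 1" using b1 u0 by (simp add: field_simps)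
      have jD: "0 < real j * \<Delta>"
      proof (rule ccontr)
        assume "\<not> 0 < real j * \<Delta>"
        then have "j = 0" using D0 by (simp add: zero_less_mult_iff)
        then have z: "u' * (real j * \<Delta>) = 0" by simp
        show False using q(3) Hf_ge1[of a1 b1 a2 b2 \<xi>'] z by linarith
      qed
      have "u * E * (real j * \<Delta>) \<le> E" using ujD E0 by (simp add: mult_left_le algebra_simps)
      also have "\<dots> < u' * (real j * \<Delta>)" using EH q(3) by linarith
      finally have "u * E < u'" using jD by (simp add: mult_less_cancel_right)
      then have "u * phi 0 < u' * phi (\<xi> - \<xi>')" by (simp add: dom_iff E_def)
      moreover have "\<xi>' \<noteq> \<xi>" using q(2) \<xi>B by auto
      ultimately show False using nd q(1) by blast
    qed
    have "j \<in> I" using jK Dempty by (simp add: I_def)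
    moreover have "\<xi> \<in> fst ` (S \<inter> ?Q j)" using inQ uS by force
    ultimately show "\<xi> \<in> (\<Union>j\<in>I. fst ` (S \<inter> ?Q j))" by blast
  qed
  have Ifin: "finite I" by (simp add: I_def)
  have Isub: "I \<subseteq> {..<K}" by (auto simp: I_def)
  have finU: "finite (\<Union>j\<in>I. fst ` (S \<inter> ?Q j))" using Ifin Isub fin by auto
  have "ecard (visible S \<inter> ?B) = of_nat (card (visible S \<inter> ?B))"
    using finite_subset[OF sub finU] by (simp add: ecard_def)
  also have "\<dots> \<le> of_nat (card (\<Union>j\<in>I. fst ` (S \<inter> ?Q j)))"
    using card_mono[OF finU sub] by simp
  also have "card (\<Union>j\<in>I. fst ` (S \<inter> ?Q j)) \<le> (\<Sum>j\<in>I. card (fst ` (S \<inter> ?Q j)))"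
    by (rule card_UN_le[OF Ifin])
  also have "\<dots> \<le> (\<Sum>j\<in>I. card (S \<inter> ?Q j))"
    by (intro sum_mono card_image_le) (use fin Isub in auto)
  also have "\<dots> = (\<Sum>j<K. card (S \<inter> ?Q j) * (if S \<inter> ?D j = {} then 1 else 0))"
  proof -
    have "(\<Sum>j<K. card (S \<inter> ?Q j) * (if S \<inter> ?D j = {} then 1 else 0)) = (\<Sum>j\<in>{j\<in>{..<K}. S \<inter> ?D j = {}}. card (S \<inter> ?Q j))"
      by (simp add: sum.inter_filter[symmetric] if_distrib cong: if_cong)
    also have "{j\<in>{..<K}. S \<inter> ?D j = {}} = I" by (auto simp: I_def)
    finally show ?thesis by simp
  qed
  finally have "ecard (visible S \<inter> ?B) \<le> of_nat (\<Sum>j<K. card (S \<inter> ?Q j) * (if S \<inter> ?D j = {} then 1 else 0))"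
    by simp
  also have "\<dots> = (\<Sum>j<K. of_nat (card (S \<inter> ?Q j)) * (if S \<inter> ?D j = {} then 1 else 0))"
    by (simp add: of_nat_sum if_distrib cong: if_cong)
  finally show ?thesis .
qed




context PPx
begin

lemma setsN: "sets N = sets (borel \<Otimes>\<^sub>M borel)" by (rule storm_sets)

lemma Lset_fin:
  assumes "0 < v" "a1 \<le> b1" "a2 \<le> b2"
  shows "emeasure N {(x, u). Lf a1 b1 a2 b2 x < u * v} < \<infinity>"
  using storm_Lset[OF tau assms] by (simp add: le_less_trans)

lemma Qs_facts:
  assumes K: "1 \<le> K" "j < K" and \<Delta>: "\<Delta> = 1 / (\<tau> * real K)" and ab: "a1 \<le> b1" "a2 \<le> b2"
  shows "Qs a1 b1 a2 b2 \<Delta> j \<in> sets N"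
    and "emeasure N (Qs a1 b1 a2 b2 \<Delta> j) = ennreal ((b1 - a1) * (b2 - a2) * \<Delta>)"
    and "emeasure N (Qs a1 b1 a2 b2 \<Delta> j) < \<infinity>"
    and "measure N (Qs a1 b1 a2 b2 \<Delta> j) = (b1 - a1) * (b2 - a2) * \<Delta>"
proof -
  have D0: "0 < \<Delta>" using tau K by (simp add: \<Delta>)
  have bt: "(real j + 1) * \<Delta> * \<tau> \<le> 1"
  proof -
    have "(real j + 1) * \<Delta> * \<tau> = (real j + 1) / real K" using tau K by (simp add: \<Delta> field_simps)
    also have "\<dots> \<le> 1" using K by (simp add: field_simps)
    finally show ?thesis .
  qed
  show S: "Qs a1 b1 a2 b2 \<Delta> j \<in> sets N" unfolding setsN Qs_def by simp
  have "emeasure N (rbox a1 b1 a2 b2 \<times> bin (real j * \<Delta>) ((real j + 1) * \<Delta>))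
      = ennreal ((b1 - a1) * (b2 - a2) * ((real j + 1) * \<Delta> - real j * \<Delta>))"
    using D0 bt ab tau by (intro storm_Q) auto
  then show E: "emeasure N (Qs a1 b1 a2 b2 \<Delta> j) = ennreal ((b1 - a1) * (b2 - a2) * \<Delta>)"
    by (simp add: Qs_def algebra_simps)
  then show "emeasure N (Qs a1 b1 a2 b2 \<Delta> j) < \<infinity>" by simp
  show "measure N (Qs a1 b1 a2 b2 \<Delta> j) = (b1 - a1) * (b2 - a2) * \<Delta>"
    using E ab D0 by (simp add: measure_def)
qed

lemma Dps_facts:
  assumes D0: "0 < \<Delta>" and ab: "a1 \<le> b1" "a2 \<le> b2"
  shows "Dps a1 b1 a2 b2 \<Delta> j \<in> sets N"
    and "emeasure N (Dps a1 b1 a2 b2 \<Delta> j) < \<infinity>"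
    and "measure N (Dps a1 b1 a2 b2 \<Delta> j) \<le> (real j + 1) * \<Delta> * ((sqrt (2*pi) + (b1 - a1)) * (sqrt (2*pi) + (b2 - a2)))"
proof -
  have v: "0 < (real j + 1) * \<Delta>" using D0 by simp
  show S: "Dps a1 b1 a2 b2 \<Delta> j \<in> sets N" unfolding setsN Dps_def Qs_def by simp
  have "emeasure N (Dps a1 b1 a2 b2 \<Delta> j) \<le> emeasure N {(x, u). Lf a1 b1 a2 b2 x < u * ((real j + 1) * \<Delta>)}"
    by (rule emeasure_mono) (auto simp: Dps_def setsN)
  also have "\<dots> \<le> ennreal ((real j + 1) * \<Delta> * ((sqrt (2*pi) + (b1 - a1)) * (sqrt (2*pi) + (b2 - a2))))"
    by (rule storm_Lset[OF tau v ab])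
  finally have le: "emeasure N (Dps a1 b1 a2 b2 \<Delta> j) \<le> ennreal ((real j + 1) * \<Delta> * ((sqrt (2*pi) + (b1 - a1)) * (sqrt (2*pi) + (b2 - a2))))" .
  then show "emeasure N (Dps a1 b1 a2 b2 \<Delta> j) < \<infinity>" by (simp add: le_less_trans)
  show "measure N (Dps a1 b1 a2 b2 \<Delta> j) \<le> (real j + 1) * \<Delta> * ((sqrt (2*pi) + (b1 - a1)) * (sqrt (2*pi) + (b2 - a2)))"
    unfolding measure_def using le D0 ab by (intro enn2real_leI) auto
qed

lemma Dms_facts:
  assumes K: "1 \<le> K" "j < K" and \<Delta>: "\<Delta> = 1 / (\<tau> * real K)" and ab: "a1 \<le> b1" "a2 \<le> b2"
  shows "Dms a1 b1 a2 b2 \<Delta> j \<in> sets N"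
    and "emeasure N (Dms a1 b1 a2 b2 \<Delta> j) < \<infinity>"
    and "2 * (b1 - a1) \<le> sqrt (2*pi) \<Longrightarrow> 2 * (b2 - a2) \<le> sqrt (2*pi) \<Longrightarrow>
      real j * \<Delta> * ((sqrt (2*pi) - 2 * (b1 - a1)) * (sqrt (2*pi) - 2 * (b2 - a2)) - (b1 - a1) * (b2 - a2))
       \<le> measure N (Dms a1 b1 a2 b2 \<Delta> j)"
proof -
  have D0: "0 < \<Delta>" using tau K by (simp add: \<Delta>)
  have v: "0 < (real j + 1) * \<Delta>" using D0 by simp
  show S: "Dms a1 b1 a2 b2 \<Delta> j \<in> sets N" unfolding setsN Dms_def by simp
  have sub: "Dms a1 b1 a2 b2 \<Delta> j \<subseteq> {(x, u). Lf a1 b1 a2 b2 x < u * ((real j + 1) * \<Delta>)}"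
  proof
    fix p assume "p \<in> Dms a1 b1 a2 b2 \<Delta> j"
    then obtain x u where p: "p = (x, u)" "Hf a1 b1 a2 b2 x < u * (real j * \<Delta>)"
      by (auto simp: Dms_def)
    have "0 < u * (real j * \<Delta>)" using p(2) Hf_ge1[of a1 b1 a2 b2 x] by linarith
    moreover have "0 \<le> real j * \<Delta>" using D0 by simp
    ultimately have u0: "0 < u" by (metis not_le mult_nonpos_nonneg)
    have "Lf a1 b1 a2 b2 x \<le> Hf a1 b1 a2 b2 x" by (rule Lf_le_Hf)
    also have "\<dots> < u * (real j * \<Delta>)" by (rule p(2))
    also have "\<dots> \<le> u * ((real j + 1) * \<Delta>)" using u0 D0 by (intro mult_left_mono) auto
    finally show "p \<in> {(x, u). Lf a1 b1 a2 b2 x < u * ((real j + 1) * \<Delta>)}" using p by simp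
  qed
  have "emeasure N (Dms a1 b1 a2 b2 \<Delta> j) \<le> emeasure N {(x, u). Lf a1 b1 a2 b2 x < u * ((real j + 1) * \<Delta>)}"
    using sub by (intro emeasure_mono) (auto simp: setsN)
  then show fin: "emeasure N (Dms a1 b1 a2 b2 \<Delta> j) < \<infinity>"
    using Lset_fin[OF v ab] by (simp add: le_less_trans)
  assume s: "2 * (b1 - a1) \<le> sqrt (2*pi)" "2 * (b2 - a2) \<le> sqrt (2*pi)"
  show "real j * \<Delta> * ((sqrt (2*pi) - 2 * (b1 - a1)) * (sqrt (2*pi) - 2 * (b2 - a2)) - (b1 - a1) * (b2 - a2))
       \<le> measure N (Dms a1 b1 a2 b2 \<Delta> j)"
  proof (cases "j = 0")
    case True
    then show ?thesis by simp
  next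
    case False
    then have jv: "0 < real j * \<Delta>" using D0 by simp
    have jt: "real j * \<Delta> * \<tau> \<le> 1"
    proof -
      have "real j * \<Delta> * \<tau> = real j / real K" using tau K by (simp add: \<Delta> field_simps)
      also have "\<dots> \<le> 1" using K by (simp add: field_simps)
      finally show ?thesis .
    qed
    have "ennreal (real j * \<Delta> * ((sqrt (2*pi) - 2 * (b1 - a1)) * (sqrt (2*pi) - 2 * (b2 - a2)) - (b1 - a1) * (b2 - a2)))
        \<le> emeasure N (Dms a1 b1 a2 b2 \<Delta> j)"
      unfolding Dms_def using storm_Hset[OF tau jv _ ab s] jt by (simp add: mult.commute)
    moreover obtain r where r: "emeasure N (Dms a1 b1 a2 b2 \<Delta> j) = ennreal r" "0 \<le> r"
      using fin by (cases "emeasure N (Dms a1 b1 a2 b2 \<Delta> j)" rule: ennreal_cases) auto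
    ultimately show ?thesis by (simp add: measure_def)
  qed
qed

end




context PPx
begin

lemma lower_bound:
  assumes K: "1 \<le> K" and \<Delta>: "\<Delta> = 1 / (\<tau> * real K)" and ab: "a1 \<le> b1" "a2 \<le> b2"
  shows "ennreal (\<Sum>j<K. (b1 - a1) * (b2 - a2) * \<Delta> * exp (- ((b1 - a1) * (b2 - a2) * \<Delta>))
            * exp (- ((real j + 1) * \<Delta> * ((sqrt (2*pi) + (b1 - a1)) * (sqrt (2*pi) + (b2 - a2))))))
     \<le> (\<integral>\<^sup>+\<omega>. ecard (visible (P \<omega>) \<inter> rbox a1 b1 a2 b2) \<partial>M)"
proof -
  let ?Q = "Qs a1 b1 a2 b2 \<Delta>" and ?D = "Dps a1 b1 a2 b2 \<Delta>"
  define m where "m = (b1 - a1) * (b2 - a2) * \<Delta>"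
  define C where "C = (sqrt (2*pi) + (b1 - a1)) * (sqrt (2*pi) + (b2 - a2))"
  define E where "E j = {\<omega>\<in>space M. card (P \<omega> \<inter> ?Q j) = 1 \<and> card (P \<omega> \<inter> ?D j) = 0}" for j
  have D0: "0 < \<Delta>" using tau K by (simp add: \<Delta>)
  note Qf = Qs_facts[OF K _ \<Delta> ab] and Df = Dps_facts[OF D0 ab]
  have disj: "?Q j \<inter> ?D j = {}" for j by (auto simp: Dps_def)
  have Esets: "E j \<in> sets M" if "j < K" for j
  proof -
    have "E j = {\<omega>\<in>space M. card (P \<omega> \<inter> ?Q j) = 1} \<inter> {\<omega>\<in>space M. card (P \<omega> \<inter> ?D j) = 0}"
      by (auto simp: E_def)
    then show ?thesis using cnt_sets[OF Qf(1,3)[OF that]] cnt_sets[OF Df(1,2)] by auto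
  qed
  have probE: "m * exp (- m) * exp (- ((real j + 1) * \<Delta> * C)) \<le> prob (E j)" if "j < K" for j
  proof -
    have "prob (E j) = m * exp (- m) * exp (- measure N (?D j))"
      unfolding E_def using prob_E[OF Qf(1,3)[OF that] Df(1,2) disj] Qf(4)[OF that] by (simp add: m_def)
    moreover have "exp (- ((real j + 1) * \<Delta> * C)) \<le> exp (- measure N (?D j))"
      using Df(3)[of j] by (simp add: C_def)
    moreover have "0 \<le> m * exp (- m)" using D0 ab by (simp add: m_def)
    ultimately show ?thesis by (simp add: mult_left_mono)
  qed
  have AEfin: "AE \<omega> in M. \<forall>j\<in>{..<K}. finite (P \<omega> \<inter> ?D j)"
    by (rule AE_finite_allI) (use finite_AE[OF Df(1,2)] in auto)
  have "ennreal (\<Sum>j<K. m * exp (- m) * exp (- ((real j + 1) * \<Delta> * C))) = (\<Sum>j<K. ennreal (m * exp (- m) * exp (- ((real j + 1) * \<Delta> * C))))"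
    using D0 ab by (intro sum_ennreal[symmetric]) (simp add: m_def)
  also have "\<dots> \<le> (\<Sum>j<K. emeasure M (E j))"
    using probE Esets by (intro sum_mono) (simp add: emeasure_eq_measure)
  also have "\<dots> = (\<integral>\<^sup>+\<omega>. (\<Sum>j<K. indicator (E j) \<omega>) \<partial>M)"
    using Esets by (subst nn_integral_sum) auto
  also have "\<dots> \<le> (\<integral>\<^sup>+\<omega>. ecard (visible (P \<omega>) \<inter> rbox a1 b1 a2 b2) \<partial>M)"
  proof (rule nn_integral_mono_AE)
    show "AE \<omega> in M. (\<Sum>j<K. indicator (E j) \<omega>) \<le> ecard (visible (P \<omega>) \<inter> rbox a1 b1 a2 b2)"
      using AEfin
    proof eventually_elim
      case (elim \<omega>)
      define J where "J = {j\<in>{..<K}. \<omega> \<in> E j}"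
      have "(\<Sum>j<K. indicator (E j) \<omega> :: ennreal) = (\<Sum>j\<in>J. 1)"
      proof -
        have "{..<K} \<inter> {j. \<omega> \<in> E j} = J" by (auto simp: J_def)
        then show ?thesis by (simp add: sum.inter_filter[symmetric] indicator_def sum.If_cases)
      qed
      also have "\<dots> = of_nat (card J)" by simp
      also have "\<dots> \<le> ecard (visible (P \<omega>) \<inter> rbox a1 b1 a2 b2)"
        by (rule lower_comb[OF D0]) (use elim in \<open>auto simp: J_def E_def\<close>)
      finally show ?case .
    qed
  qed
  finally show ?thesis by (simp add: m_def C_def)
qed

lemma upper_bound:
  assumes K: "1 \<le> K" and \<Delta>: "\<Delta> = 1 / (\<tau> * real K)" and ab: "a1 \<le> b1" "a2 \<le> b2"
    and s: "2 * (b1 - a1) \<le> sqrt (2*pi)" "2 * (b2 - a2) \<le> sqrt (2*pi)"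
  shows "(\<integral>\<^sup>+\<omega>. ecard (visible (P \<omega>) \<inter> rbox a1 b1 a2 b2) \<partial>M)
     \<le> ennreal (\<Sum>j<K. (b1 - a1) * (b2 - a2) * \<Delta>
            * exp (- (real j * \<Delta> * ((sqrt (2*pi) - 2 * (b1 - a1)) * (sqrt (2*pi) - 2 * (b2 - a2)) - (b1 - a1) * (b2 - a2)))))"
proof -
  let ?Q = "Qs a1 b1 a2 b2 \<Delta>" and ?D = "Dms a1 b1 a2 b2 \<Delta>" and ?B = "rbox a1 b1 a2 b2"
  define m where "m = (b1 - a1) * (b2 - a2) * \<Delta>"
  define C where "C = (sqrt (2*pi) - 2 * (b1 - a1)) * (sqrt (2*pi) - 2 * (b2 - a2)) - (b1 - a1) * (b2 - a2)"
  define X0 where "X0 = ?B \<times> {..\<tau>}"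
  have D0: "0 < \<Delta>" using tau K by (simp add: \<Delta>)
  note Qf = Qs_facts[OF K _ \<Delta> ab] and Df = Dms_facts[OF K _ \<Delta> ab]
  have disj: "?Q j \<inter> ?D j = {}" for j by (auto simp: Dms_def Qs_def)
  have X0s: "X0 \<in> sets N" unfolding X0_def setsN by simp
  have X00: "emeasure N X0 = 0"
  proof -
    have "X0 \<in> sets (borel \<Otimes>\<^sub>M borel)" using X0s by (simp add: setsN)
    then have "emeasure N X0 = (\<integral>\<^sup>+x. \<integral>\<^sup>+u. ennreal (1 / u\<^sup>2) * indicator {\<tau><..} u * indicator X0 (x, u) \<partial>lborel \<partial>lborel)"
      by (rule storm_emeasure[OF tau])
    also have "\<dots> = (\<integral>\<^sup>+x. 0 \<partial>(lborel :: (real^2) measure))"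
    proof (rule nn_integral_cong)
      fix x :: "real^2"
      have "\<And>u. ennreal (1 / u\<^sup>2) * indicator {\<tau><..} u * indicator X0 (x, u) = 0"
        by (auto simp: X0_def indicator_def)
      then have "(\<integral>\<^sup>+u. ennreal (1 / u\<^sup>2) * indicator {\<tau><..} u * indicator X0 (x, u) \<partial>lborel) = (\<integral>\<^sup>+u. 0 \<partial>(lborel :: real measure))"
        by (intro nn_integral_cong) simp
      then show "(\<integral>\<^sup>+u. ennreal (1 / u\<^sup>2) * indicator {\<tau><..} u * indicator X0 (x, u) \<partial>lborel) = 0"
        by simp
    qed
    finally show ?thesis by simp
  qed
  have AE0: "AE \<omega> in M. P \<omega> \<inter> X0 = {}"
  proof -
    have "prob {\<omega>\<in>space M. card (P \<omega> \<inter> X0) = 0} = 1"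
      using cnt_prob[OF X0s, of 0] X00 by (simp add: measure_def)
    then have "AE \<omega> in M. \<omega> \<in> {\<omega>\<in>space M. card (P \<omega> \<inter> X0) = 0}" by (rule AE_prob_1)
    moreover have "AE \<omega> in M. finite (P \<omega> \<inter> X0)" using finite_AE[OF X0s] X00 by simp
    ultimately show ?thesis by eventually_elim auto
  qed
  have AEfin: "AE \<omega> in M. \<forall>j\<in>{..<K}. finite (P \<omega> \<inter> ?Q j) \<and> finite (P \<omega> \<inter> ?D j)"
    by (rule AE_finite_allI) (use finite_AE[OF Qf(1,3)] finite_AE[OF Df(1,2)] in \<open>auto intro: AE_conjI\<close>)
  have "(\<integral>\<^sup>+\<omega>. ecard (visible (P \<omega>) \<inter> ?B) \<partial>M)
      \<le> (\<integral>\<^sup>+\<omega>. (\<Sum>j<K. of_nat (card (P \<omega> \<inter> ?Q j)) * indicator {\<omega>\<in>space M. card (P \<omega> \<inter> ?D j) = 0} \<omega>) \<partial>M)"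
  proof (rule nn_integral_mono_AE)
    show "AE \<omega> in M. ecard (visible (P \<omega>) \<inter> ?B)
        \<le> (\<Sum>j<K. of_nat (card (P \<omega> \<inter> ?Q j)) * indicator {\<omega>\<in>space M. card (P \<omega> \<inter> ?D j) = 0} \<omega>)"
      using AE0 AEfin AE_space
    proof eventually_elim
      case (elim \<omega>)
      have "ecard (visible (P \<omega>) \<inter> ?B)
          \<le> (\<Sum>j<K. of_nat (card (P \<omega> \<inter> ?Q j)) * (if P \<omega> \<inter> ?D j = {} then 1 else 0))"
        by (rule upper_comb[OF tau K \<Delta>]) (use elim in \<open>auto simp: X0_def\<close>)
      also have "\<dots> = (\<Sum>j<K. of_nat (card (P \<omega> \<inter> ?Q j)) * indicator {\<omega>\<in>space M. card (P \<omega> \<inter> ?D j) = 0} \<omega>)"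
      proof (rule sum.cong)
        fix j assume "j \<in> {..<K}"
        then have "finite (P \<omega> \<inter> ?D j)" using elim by auto
        then show "of_nat (card (P \<omega> \<inter> ?Q j)) * (if P \<omega> \<inter> ?D j = {} then 1 else 0)
            = of_nat (card (P \<omega> \<inter> ?Q j)) * (indicator {\<omega>\<in>space M. card (P \<omega> \<inter> ?D j) = 0} \<omega> :: ennreal)"
          using elim by (simp add: indicator_def)
      qed simp
      finally show ?case .
    qed
  qed
  also have "\<dots> = (\<Sum>j<K. (\<integral>\<^sup>+\<omega>. of_nat (card (P \<omega> \<inter> ?Q j)) * indicator {\<omega>\<in>space M. card (P \<omega> \<inter> ?D j) = 0} \<omega> \<partial>M))"
  proof (rule nn_integral_sum)
    fix j assume j: "j \<in> {..<K}"
    have "(\<lambda>\<omega>. card (P \<omega> \<inter> ?Q j)) \<in> measurable M (count_space UNIV)"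
    proof -
      have c: "(\<lambda>\<omega>. card (P \<omega> \<inter> ?Q j)) -` {k} \<inter> space M \<in> sets M" for k
      proof -
        have "(\<lambda>\<omega>. card (P \<omega> \<inter> ?Q j)) -` {k} \<inter> space M = {\<omega>\<in>space M. card (P \<omega> \<inter> ?Q j) = k}" by auto
        then show ?thesis using cnt_sets[OF Qf(1,3)] j by simp
      qed
      show ?thesis using c by (auto simp: measurable_count_space_eq2_countable)
    qed
    then have m1: "(\<lambda>\<omega>. of_nat (card (P \<omega> \<inter> ?Q j)) :: ennreal) \<in> borel_measurable M"
      by (rule measurable_compose) simp
    have s: "{\<omega>\<in>space M. card (P \<omega> \<inter> ?D j) = 0} \<in> sets M" using cnt_sets[OF Df(1,2)] j by auto
    show "(\<lambda>\<omega>. of_nat (card (P \<omega> \<inter> ?Q j)) * indicator {\<omega>\<in>space M. card (P \<omega> \<inter> ?D j) = 0} \<omega> :: ennreal) \<in> borel_measurable M"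
      by (rule borel_measurable_times_ennreal[OF m1 borel_measurable_indicator[OF s]])
  qed
  also have "\<dots> = (\<Sum>j<K. ennreal (m * exp (- measure N (?D j))))"
    by (intro sum.cong refl) (simp add: expect_AD[OF Qf(1,3) Df(1,2) disj] Qf(4) m_def)
  also have "\<dots> \<le> (\<Sum>j<K. ennreal (m * exp (- (real j * \<Delta> * C))))"
  proof (intro sum_mono ennreal_leI mult_left_mono)
    fix j assume "j \<in> {..<K}"
    then show "exp (- measure N (?D j)) \<le> exp (- (real j * \<Delta> * C))"
      using Df(3)[of j] s by (simp add: C_def)
    show "0 \<le> m" using D0 ab by (simp add: m_def)
  qed
  also have "\<dots> = ennreal (\<Sum>j<K. m * exp (- (real j * \<Delta> * C)))"
    using D0 ab by (intro sum_ennreal) (simp add: m_def)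
  finally show ?thesis by (simp add: m_def C_def)
qed

end




definition sbox :: "real^2 \<Rightarrow> real \<Rightarrow> (real^2) set" where
  "sbox \<xi>0 s = rbox (\<xi>0$1 - s/2) (\<xi>0$1 + s/2) (\<xi>0$2 - s/2) (\<xi>0$2 + s/2)"

lemma sbox_area: "0 \<le> s \<Longrightarrow> emeasure lborel (sbox \<xi>0 s) = ennreal (s * s)"
  unfolding sbox_def by (subst box_area) auto

lemma sbox_sets: "sbox \<xi>0 s \<in> sets lborel"
  unfolding sbox_def by simp

lemma sbox_ball: "0 < s \<Longrightarrow> \<xi> \<in> sbox \<xi>0 s \<Longrightarrow> dist \<xi> \<xi>0 < s"
proof -
  assume s: "0 < s" and x: "\<xi> \<in> sbox \<xi>0 s"
  then have h: "\<bar>\<xi>$1 - \<xi>0$1\<bar> \<le> s/2" "\<bar>\<xi>$2 - \<xi>0$2\<bar> \<le> s/2"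
    unfolding sbox_def rbox_def abs_le_iff by auto
  have "\<bar>\<xi>$1 - \<xi>0$1\<bar>\<^sup>2 \<le> (s/2)\<^sup>2" "\<bar>\<xi>$2 - \<xi>0$2\<bar>\<^sup>2 \<le> (s/2)\<^sup>2"
    by (rule power_mono[OF h(1) abs_ge_zero], rule power_mono[OF h(2) abs_ge_zero])
  then have "(\<xi>$1 - \<xi>0$1)\<^sup>2 \<le> (s/2)\<^sup>2" "(\<xi>$2 - \<xi>0$2)\<^sup>2 \<le> (s/2)\<^sup>2"
    by simp_all
  then have "(dist \<xi> \<xi>0)\<^sup>2 \<le> (s/2)\<^sup>2 + (s/2)\<^sup>2" by (simp add: dist_norm norm_diff_sq)
  also have "\<dots> < s\<^sup>2" using s by (simp add: power2_eq_square field_simps)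
  finally show ?thesis using s by (simp add: power_less_imp_less_base)
qed

lemma rho_ge:
  fixes \<rho> :: "real^2 \<Rightarrow> real"
  assumes cont: "continuous_on UNIV \<rho>" and s0: "0 < s0"
    and lb: "\<And>s. 0 < s \<Longrightarrow> s < s0 \<Longrightarrow> ennreal (s * s * lbf s) \<le> (\<integral>\<^sup>+\<xi>\<in>sbox \<xi>0 s. ennreal (\<rho> \<xi>) \<partial>lborel)"
    and lim: "(lbf \<longlongrightarrow> lbz) (at_right 0)" and l0: "0 < lbz"
  shows "lbz \<le> \<rho> \<xi>0"
proof (rule ccontr)
  assume "\<not> lbz \<le> \<rho> \<xi>0"
  then have lt: "\<rho> \<xi>0 < lbz" by simp
  define c where "c = max ((\<rho> \<xi>0 + lbz) / 2) (lbz / 2)"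
  have c0: "0 < c" and cl: "c < lbz" and cr: "\<rho> \<xi>0 < c" using lt l0 by (auto simp: c_def less_max_iff_disj max_less_iff_conj)
  have ev1: "eventually (\<lambda>s. c < lbf s) (at_right 0)"
    using order_tendstoD(1)[OF lim cl] .
  have "isCont \<rho> \<xi>0" using cont by (simp add: continuous_on_eq_continuous_at)
  then obtain \<delta> where d: "0 < \<delta>" "\<And>\<xi>. dist \<xi> \<xi>0 < \<delta> \<Longrightarrow> dist (\<rho> \<xi>) (\<rho> \<xi>0) < c - \<rho> \<xi>0"
    using cr unfolding continuous_at_eps_delta by (metis diff_gt_0_iff_gt)
  have ev2: "eventually (\<lambda>s. 0 < s \<and> s < s0 \<and> s < \<delta>) (at_right 0)"
    using s0 d(1) by (auto simp: eventually_at_right_field intro: exI[of _ "min s0 \<delta>"])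
  obtain s where s: "c < lbf s" "0 < s" "s < s0" "s < \<delta>"
    using eventually_happens[OF eventually_conj[OF ev1 ev2]] by auto
  have "(\<integral>\<^sup>+\<xi>\<in>sbox \<xi>0 s. ennreal (\<rho> \<xi>) \<partial>lborel) \<le> (\<integral>\<^sup>+\<xi>\<in>sbox \<xi>0 s. ennreal c \<partial>lborel)"
  proof (rule nn_integral_mono)
    fix \<xi>
    show "ennreal (\<rho> \<xi>) * indicator (sbox \<xi>0 s) \<xi> \<le> ennreal c * indicator (sbox \<xi>0 s) \<xi>"
    proof (cases "\<xi> \<in> sbox \<xi>0 s")
      case True
      then have "dist \<xi> \<xi>0 < \<delta>" using sbox_ball[OF s(2)] s(4) by fastforce
      then have "\<bar>\<rho> \<xi> - \<rho> \<xi>0\<bar> < c - \<rho> \<xi>0" using d(2) by (simp add: dist_real_def)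
      then have "\<rho> \<xi> < c" by (simp add: abs_less_iff)
      then show ?thesis using True by (auto intro: ennreal_leI)
    qed simp
  qed
  also have "\<dots> = ennreal c * emeasure lborel (sbox \<xi>0 s)"
    using sbox_sets by (simp add: nn_integral_cmult_indicator)
  also have "\<dots> = ennreal (s * s * c)" using s c0 by (simp add: sbox_area ennreal_mult[symmetric] mult.commute)
  also have "\<dots> < ennreal (s * s * lbf s)"
    using s c0 by (subst ennreal_less_iff) (auto intro: mult_strict_left_mono)
  also have "\<dots> \<le> (\<integral>\<^sup>+\<xi>\<in>sbox \<xi>0 s. ennreal (\<rho> \<xi>) \<partial>lborel)" using lb s by simp
  finally show False by simp
qed

lemma rho_le:
  fixes \<rho> :: "real^2 \<Rightarrow> real"
  assumes cont: "continuous_on UNIV \<rho>" and s0: "0 < s0"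
    and ub: "\<And>s. 0 < s \<Longrightarrow> s < s0 \<Longrightarrow> (\<integral>\<^sup>+\<xi>\<in>sbox \<xi>0 s. ennreal (\<rho> \<xi>) \<partial>lborel) \<le> ennreal (s * s * \<upsilon> s)"
    and lim: "(\<upsilon> \<longlongrightarrow> \<upsilon>0) (at_right 0)" and u0: "0 \<le> \<upsilon>0"
  shows "\<rho> \<xi>0 \<le> \<upsilon>0"
proof (rule ccontr)
  assume "\<not> \<rho> \<xi>0 \<le> \<upsilon>0"
  then have lt: "\<upsilon>0 < \<rho> \<xi>0" by simp
  define c where "c = (\<rho> \<xi>0 + \<upsilon>0) / 2"
  have c0: "0 < c" and cl: "\<upsilon>0 < c" and cr: "c < \<rho> \<xi>0" using lt u0 by (auto simp: c_def)
  have ev1: "eventually (\<lambda>s. \<upsilon> s < c) (at_right 0)"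
    using order_tendstoD(2)[OF lim cl] .
  have "isCont \<rho> \<xi>0" using cont by (simp add: continuous_on_eq_continuous_at)
  then obtain \<delta> where d: "0 < \<delta>" "\<And>\<xi>. dist \<xi> \<xi>0 < \<delta> \<Longrightarrow> dist (\<rho> \<xi>) (\<rho> \<xi>0) < \<rho> \<xi>0 - c"
    using cr unfolding continuous_at_eps_delta by (metis diff_gt_0_iff_gt)
  have ev2: "eventually (\<lambda>s. 0 < s \<and> s < s0 \<and> s < \<delta>) (at_right 0)"
    using s0 d(1) by (auto simp: eventually_at_right_field intro: exI[of _ "min s0 \<delta>"])
  obtain s where s: "\<upsilon> s < c" "0 < s" "s < s0" "s < \<delta>"
    using eventually_happens[OF eventually_conj[OF ev1 ev2]] by auto
  have "ennreal (s * s * \<upsilon> s) < ennreal (s * s * c)"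
    using s c0 by (intro ennreal_lessI) (auto intro: mult_strict_left_mono)
  also have "\<dots> = ennreal c * emeasure lborel (sbox \<xi>0 s)"
    using s c0 by (simp add: sbox_area ennreal_mult[symmetric] mult.commute)
  also have "\<dots> = (\<integral>\<^sup>+\<xi>\<in>sbox \<xi>0 s. ennreal c \<partial>lborel)"
    using sbox_sets by (simp add: nn_integral_cmult_indicator)
  also have "\<dots> \<le> (\<integral>\<^sup>+\<xi>\<in>sbox \<xi>0 s. ennreal (\<rho> \<xi>) \<partial>lborel)"
  proof (rule nn_integral_mono)
    fix \<xi>
    show "ennreal c * indicator (sbox \<xi>0 s) \<xi> \<le> ennreal (\<rho> \<xi>) * indicator (sbox \<xi>0 s) \<xi>"
    proof (cases "\<xi> \<in> sbox \<xi>0 s")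
      case True
      then have "dist \<xi> \<xi>0 < \<delta>" using sbox_ball[OF s(2)] s(4) by fastforce
      then have "\<bar>\<rho> \<xi> - \<rho> \<xi>0\<bar> < \<rho> \<xi>0 - c" using d(2) by (simp add: dist_real_def)
      then have "c < \<rho> \<xi>" by (simp add: abs_less_iff)
      then show ?thesis using True by (auto intro: ennreal_leI)
    qed simp
  qed
  also have "\<dots> \<le> ennreal (s * s * \<upsilon> s)" using ub s by simp
  finally show False by simp
qed

lemma phi_integral: "(\<integral>\<xi>'. phi (\<xi> - \<xi>') \<partial>lborel) = 1"
proof -
  have eq: "ennreal (phi (\<xi> - \<xi>')) = ennreal (1 / (2*pi)) * ennreal (exp (- ((\<xi>'$1 - \<xi>$1)\<^sup>2) / 2) * exp (- ((\<xi>'$2 - \<xi>$2)\<^sup>2) / 2))" for \<xi>'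
  proof -
    have "phi (\<xi> - \<xi>') = 1 / (2*pi) * (exp (- ((\<xi>'$1 - \<xi>$1)\<^sup>2) / 2) * exp (- ((\<xi>'$2 - \<xi>$2)\<^sup>2) / 2))"
      by (simp add: phi_def norm_diff_sq exp_add[symmetric] power2_commute field_simps)
    then show ?thesis by (simp add: ennreal_mult[symmetric])
  qed
  have "(\<integral>\<^sup>+\<xi>'. ennreal (phi (\<xi> - \<xi>')) \<partial>lborel)
      = ennreal (1 / (2*pi)) * (\<integral>\<^sup>+\<xi>'. ennreal (exp (- (((\<xi>'::real^2)$1 - \<xi>$1)\<^sup>2) / 2) * exp (- ((\<xi>'$2 - \<xi>$2)\<^sup>2) / 2)) \<partial>lborel)"
    by (simp only: eq) (rule nn_integral_cmult, simp)
  also have "(\<integral>\<^sup>+\<xi>'. ennreal (exp (- (((\<xi>'::real^2)$1 - \<xi>$1)\<^sup>2) / 2) * exp (- ((\<xi>'$2 - \<xi>$2)\<^sup>2) / 2)) \<partial>lborel)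
      = (\<integral>\<^sup>+t. ennreal (exp (- ((t - \<xi>$1)\<^sup>2) / 2)) \<partial>lborel) * (\<integral>\<^sup>+t. ennreal (exp (- ((t - \<xi>$2)\<^sup>2) / 2)) \<partial>lborel)"
    by (rule nn_integral_vec2[of "\<lambda>t. exp (- ((t - \<xi>$1)\<^sup>2) / 2)" "\<lambda>t. exp (- ((t - \<xi>$2)\<^sup>2) / 2)"]) auto
  also have "\<dots> = ennreal (sqrt (2*pi)) * ennreal (sqrt (2*pi))" by (simp only: gauss_full)
  also have "ennreal (1 / (2*pi)) * (ennreal (sqrt (2*pi)) * ennreal (sqrt (2*pi))) = ennreal 1"
    by (simp add: ennreal_mult[symmetric])
  finally have "(\<integral>\<^sup>+\<xi>'. ennreal (phi (\<xi> - \<xi>')) \<partial>lborel) = ennreal 1" .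
  moreover have "(\<lambda>\<xi>'. phi (\<xi> - \<xi>')) \<in> borel_measurable lborel" unfolding phi_def by measurable
  moreover have "AE \<xi>' in lborel. 0 \<le> phi (\<xi> - \<xi>')" by (simp add: phi_def)
  ultimately show ?thesis
    using nn_integral_eq_integrable[of "\<lambda>\<xi>'. phi (\<xi> - \<xi>')" lborel 1] by simp
qed




lemma sqrt2pi_sq: "sqrt (2*pi) * sqrt (2*pi) = 2 * pi"
  by simp

context PPx
begin

lemma rho_bounds:
  fixes \<rho> :: "real^2 \<Rightarrow> real"
  assumes intensity: "\<forall>B\<in>sets lborel.
        (\<integral>\<^sup>+\<omega>. ecard (visible (P \<omega>) \<inter> B) \<partial>M) = (\<integral>\<^sup>+\<xi>\<in>B. ennreal (\<rho> \<xi>) \<partial>lborel)"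
    and cont: "continuous_on UNIV \<rho>" and K: "1 \<le> K" and \<Delta>: "\<Delta> = 1 / (\<tau> * real K)"
  shows "(\<Sum>j<K. \<Delta> * exp (- ((real j + 1) * \<Delta> * (2 * pi)))) \<le> \<rho> \<xi>0"
    and "\<rho> \<xi>0 \<le> (\<Sum>j<K. \<Delta> * exp (- (real j * \<Delta> * (2 * pi))))"
proof -
  have D0: "0 < \<Delta>" using tau K by (simp add: \<Delta>)
  have int_eq: "(\<integral>\<^sup>+\<omega>. ecard (visible (P \<omega>) \<inter> sbox \<xi>0 s) \<partial>M) = (\<integral>\<^sup>+\<xi>\<in>sbox \<xi>0 s. ennreal (\<rho> \<xi>) \<partial>lborel)" for s
    using intensity sbox_sets by blast
  define lbf where "lbf s = (\<Sum>j<K. \<Delta> * exp (- (s * s * \<Delta>)) * exp (- ((real j + 1) * \<Delta> * ((sqrt (2*pi) + s) * (sqrt (2*pi) + s)))))" for s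
  define ubf where "ubf s = (\<Sum>j<K. \<Delta> * exp (- (real j * \<Delta> * ((sqrt (2*pi) - 2 * s) * (sqrt (2*pi) - 2 * s) - s * s))))" for s
  show "(\<Sum>j<K. \<Delta> * exp (- ((real j + 1) * \<Delta> * (2 * pi)))) \<le> \<rho> \<xi>0"
  proof (rule rho_ge[OF cont zero_less_one])
    fix s :: real assume s: "0 < s" "s < 1"
    have "ennreal (s * s * lbf s) = ennreal (\<Sum>j<K. s * s * \<Delta> * exp (- (s * s * \<Delta>)) * exp (- ((real j + 1) * \<Delta> * ((sqrt (2*pi) + s) * (sqrt (2*pi) + s)))))"
      by (simp add: lbf_def sum_distrib_left mult.assoc)
    also have "\<dots> \<le> (\<integral>\<^sup>+\<omega>. ecard (visible (P \<omega>) \<inter> sbox \<xi>0 s) \<partial>M)"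
      using lower_bound[OF K \<Delta>, of "\<xi>0$1 - s/2" "\<xi>0$1 + s/2" "\<xi>0$2 - s/2" "\<xi>0$2 + s/2"] s
      by (simp add: sbox_def)
    finally show "ennreal (s * s * lbf s) \<le> (\<integral>\<^sup>+\<xi>\<in>sbox \<xi>0 s. ennreal (\<rho> \<xi>) \<partial>lborel)"
      by (simp add: int_eq)
  next
    have "(lbf \<longlongrightarrow> (\<Sum>j<K. \<Delta> * exp (- (0 * 0 * \<Delta>)) * exp (- ((real j + 1) * \<Delta> * ((sqrt (2*pi) + 0) * (sqrt (2*pi) + 0)))))) (at_right 0)"
      unfolding lbf_def by (intro tendsto_intros)
    then show "(lbf \<longlongrightarrow> (\<Sum>j<K. \<Delta> * exp (- ((real j + 1) * \<Delta> * (2 * pi))))) (at_right 0)"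
      by (simp only: sqrt2pi_sq add_0_right mult_zero_left mult_zero_right minus_zero exp_zero mult_1_right)
  next
    show "0 < (\<Sum>j<K. \<Delta> * exp (- ((real j + 1) * \<Delta> * (2 * pi))))"
    proof -
      have "0 \<in> {..<K}" using K by simp
      then have "{..<K} \<noteq> {}" by blast
      then show ?thesis using D0 by (intro sum_pos) auto
    qed
  qed
  show "\<rho> \<xi>0 \<le> (\<Sum>j<K. \<Delta> * exp (- (real j * \<Delta> * (2 * pi))))"
  proof (rule rho_le[OF cont zero_less_one])
    fix s :: real assume s: "0 < s" "s < 1"
    have s2: "2 * s \<le> sqrt (2*pi)"
    proof -
      have "2 * s \<le> 2" using s by simp
      also have "2 = sqrt 4" by simp
      also have "sqrt 4 \<le> sqrt (2*pi)" using pi_gt3 by (subst real_sqrt_le_iff) linarith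
      finally show ?thesis .
    qed
    have "(\<integral>\<^sup>+\<omega>. ecard (visible (P \<omega>) \<inter> sbox \<xi>0 s) \<partial>M)
        \<le> ennreal (\<Sum>j<K. s * s * \<Delta> * exp (- (real j * \<Delta> * ((sqrt (2*pi) - 2 * s) * (sqrt (2*pi) - 2 * s) - s * s))))"
      using upper_bound[OF K \<Delta>, of "\<xi>0$1 - s/2" "\<xi>0$1 + s/2" "\<xi>0$2 - s/2" "\<xi>0$2 + s/2"] s s2
      by (simp add: sbox_def)
    also have "\<dots> = ennreal (s * s * ubf s)"
      by (simp add: ubf_def sum_distrib_left mult.assoc)
    finally show "(\<integral>\<^sup>+\<xi>\<in>sbox \<xi>0 s. ennreal (\<rho> \<xi>) \<partial>lborel) \<le> ennreal (s * s * ubf s)"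
      by (simp add: int_eq)
  next
    have "(ubf \<longlongrightarrow> (\<Sum>j<K. \<Delta> * exp (- (real j * \<Delta> * ((sqrt (2*pi) - 2 * 0) * (sqrt (2*pi) - 2 * 0) - 0 * 0))))) (at_right 0)"
      unfolding ubf_def by (intro tendsto_intros)
    then show "(ubf \<longlongrightarrow> (\<Sum>j<K. \<Delta> * exp (- (real j * \<Delta> * (2 * pi))))) (at_right 0)"
      by (simp only: sqrt2pi_sq diff_0_right mult_zero_left mult_zero_right)
  next
    show "0 \<le> (\<Sum>j<K. \<Delta> * exp (- (real j * \<Delta> * (2 * pi))))"
      using D0 by (intro sum_nonneg) auto
  qed
qed

end




lemma g_lim: "((\<lambda>x::real. x / (1 - exp (- (2*pi) * x))) \<longlongrightarrow> 1 / (2 * pi)) (at_right 0)"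
proof -
  have "((\<lambda>x::real. x / (1 - exp (- (2*pi) * x))) \<longlongrightarrow> inverse pi / 2) (at_right 0)"
    by real_asymp
  then show ?thesis by (simp add: field_simps)
qed

lemma c_lim: "((\<lambda>t::real. (1 - exp (- (2*pi) / t)) / (2*pi)) \<longlongrightarrow> 1 / (2 * pi)) (at_right 0)"
proof -
  have "((\<lambda>t::real. (1 - exp (- (2*pi) / t)) / (2*pi)) \<longlongrightarrow> inverse pi / 2) (at_right 0)"
    by real_asymp
  then show ?thesis by (simp add: field_simps)
qed

lemma geom_sum:
  assumes "0 < \<Delta>"
  shows "(\<Sum>j<K. \<Delta> * exp (- (real j * \<Delta> * (2 * pi))))
       = (1 - exp (- (2*pi) * (\<Delta> * real K))) * (\<Delta> / (1 - exp (- (2*pi) * \<Delta>)))"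
    and "(\<Sum>j<K. \<Delta> * exp (- ((real j + 1) * \<Delta> * (2 * pi))))
       = exp (- (2*pi) * \<Delta>) * ((1 - exp (- (2*pi) * (\<Delta> * real K))) * (\<Delta> / (1 - exp (- (2*pi) * \<Delta>))))"
proof -
  define q where "q = exp (- (2*pi) * \<Delta>)"
  have q1: "q \<noteq> 1" using assms by (simp add: q_def)
  have pw: "exp (- (real j * \<Delta> * (2 * pi))) = q ^ j" for j
    by (simp add: q_def exp_of_nat_mult[symmetric] algebra_simps)
  have pK: "exp (- (2*pi) * (\<Delta> * real K)) = q ^ K"
    by (simp add: q_def exp_of_nat_mult[symmetric] algebra_simps)
  have S: "(\<Sum>j<K. \<Delta> * exp (- (real j * \<Delta> * (2 * pi)))) = \<Delta> * ((1 - q ^ K) / (1 - q))"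
    by (simp add: pw sum_distrib_left[symmetric] sum_gp_strict q1)
  show "(\<Sum>j<K. \<Delta> * exp (- (real j * \<Delta> * (2 * pi))))
       = (1 - exp (- (2*pi) * (\<Delta> * real K))) * (\<Delta> / (1 - exp (- (2*pi) * \<Delta>)))"
    unfolding S pK by (simp add: q_def)
  have "exp (- ((real j + 1) * \<Delta> * (2 * pi))) = q * exp (- (real j * \<Delta> * (2 * pi)))" for j
    by (simp add: q_def exp_add[symmetric] algebra_simps)
  then have "(\<Sum>j<K. \<Delta> * exp (- ((real j + 1) * \<Delta> * (2 * pi)))) = q * (\<Sum>j<K. \<Delta> * exp (- (real j * \<Delta> * (2 * pi))))"
    by (simp add: sum_distrib_left algebra_simps)
  then show "(\<Sum>j<K. \<Delta> * exp (- ((real j + 1) * \<Delta> * (2 * pi))))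
       = exp (- (2*pi) * \<Delta>) * ((1 - exp (- (2*pi) * (\<Delta> * real K))) * (\<Delta> / (1 - exp (- (2*pi) * \<Delta>))))"
    unfolding S pK by (simp add: q_def)
qed

context PPx
begin

lemma rho_exact:
  fixes \<rho> :: "real^2 \<Rightarrow> real"
  assumes intensity: "\<forall>B\<in>sets lborel.
        (\<integral>\<^sup>+\<omega>. ecard (visible (P \<omega>) \<inter> B) \<partial>M) = (\<integral>\<^sup>+\<xi>\<in>B. ennreal (\<rho> \<xi>) \<partial>lborel)"
    and cont: "continuous_on UNIV \<rho>"
  shows "\<rho> \<xi>0 = (1 - exp (- (2*pi) / \<tau>)) / (2*pi)"
proof -
  define \<Delta> where "\<Delta> K = 1 / (\<tau> * real K)" for K :: nat
  define c where "c = (1 - exp (- (2*pi) / \<tau>)) / (2*pi)"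
  have DK: "\<Delta> K * real K = 1 / \<tau>" if "1 \<le> K" for K using that tau by (simp add: \<Delta>_def)
  have Dpos: "eventually (\<lambda>K. 0 < \<Delta> K) sequentially"
    using tau by (auto simp: \<Delta>_def eventually_sequentially intro!: exI[of _ 1])
  have Dlim: "filterlim \<Delta> (at_right 0) sequentially"
  proof (rule tendsto_imp_filterlim_at_right)
    have "((\<lambda>K. (1 / \<tau>) * (1 / real K)) \<longlongrightarrow> (1 / \<tau>) * 0) sequentially"
      by (intro tendsto_intros)
    then show "(\<Delta> \<longlongrightarrow> 0) sequentially" by (simp add: \<Delta>_def[abs_def])
  qed (rule Dpos)
  have glim: "((\<lambda>K. \<Delta> K / (1 - exp (- (2*pi) * \<Delta> K))) \<longlongrightarrow> 1 / (2 * pi)) sequentially"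
    using filterlim_compose[OF g_lim Dlim] by simp
  have qlim: "((\<lambda>K. exp (- (2*pi) * \<Delta> K)) \<longlongrightarrow> exp (- (2*pi) * 0)) sequentially"
    using filterlim_at_right_to_0 Dlim by (intro tendsto_intros) (simp add: filterlim_at)
  define U where "U K = (1 - exp (- (2*pi) / \<tau>)) * (\<Delta> K / (1 - exp (- (2*pi) * \<Delta> K)))" for K
  define L where "L K = exp (- (2*pi) * \<Delta> K) * U K" for K
  have Ulim: "(U \<longlongrightarrow> c) sequentially"
    unfolding U_def c_def using tendsto_mult[OF tendsto_const glim, of "1 - exp (- (2*pi) / \<tau>)"]
    by simp
  have Llim: "(L \<longlongrightarrow> c) sequentially"
    unfolding L_def using tendsto_mult[OF qlim Ulim] by simp
  have evU: "eventually (\<lambda>K. \<rho> \<xi>0 \<le> U K) sequentially"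
  proof (rule eventually_sequentiallyI[of 1])
    fix K :: nat assume K: "1 \<le> K"
    have "\<rho> \<xi>0 \<le> (\<Sum>j<K. \<Delta> K * exp (- (real j * \<Delta> K * (2 * pi))))"
      by (rule rho_bounds(2)[OF intensity cont K]) (simp add: \<Delta>_def)
    also have "\<dots> = U K"
      using geom_sum(1)[of "\<Delta> K" K] DK[OF K] tau K by (simp add: U_def \<Delta>_def divide_minus_left)
    finally show "\<rho> \<xi>0 \<le> U K" .
  qed
  have evL: "eventually (\<lambda>K. L K \<le> \<rho> \<xi>0) sequentially"
  proof (rule eventually_sequentiallyI[of 1])
    fix K :: nat assume K: "1 \<le> K"
    have "L K = (\<Sum>j<K. \<Delta> K * exp (- ((real j + 1) * \<Delta> K * (2 * pi))))"
      using geom_sum(2)[of "\<Delta> K" K] DK[OF K] tau K by (simp add: L_def U_def \<Delta>_def divide_minus_left)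
    also have "\<dots> \<le> \<rho> \<xi>0"
      by (rule rho_bounds(1)[OF intensity cont K]) (simp add: \<Delta>_def)
    finally show "L K \<le> \<rho> \<xi>0" .
  qed
  have "\<rho> \<xi>0 \<le> c" using tendsto_lowerbound[OF Ulim evU] by simp
  moreover have "c \<le> \<rho> \<xi>0" using tendsto_upperbound[OF Llim evL] by simp
  ultimately show ?thesis by (simp add: c_def)
qed

end

theorem mainTheorem6:
  fixes M :: "real \<Rightarrow> 'w measure"
    and \<Phi> :: "real \<Rightarrow> 'w \<Rightarrow> ((real^2) \<times> real) set"
    and \<rho> :: "real \<Rightarrow> real^2 \<Rightarrow> real"
  assumes pp: "\<forall>\<tau>>0. poisson_process (M \<tau>) (\<Phi> \<tau>) (storm_intensity \<tau>)"
    and intensity: "\<forall>\<tau>>0. \<forall>B\<in>sets lborel.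
        (\<integral>\<^sup>+\<omega>. ecard (visible (\<Phi> \<tau> \<omega>) \<inter> B) \<partial>M \<tau>) = (\<integral>\<^sup>+\<xi>\<in>B. ennreal (\<rho> \<tau> \<xi>) \<partial>lborel)"
    and cont: "\<forall>\<tau>>0. continuous_on UNIV (\<rho> \<tau>)"
  shows "\<forall>\<xi>. ((\<lambda>\<tau>. \<rho> \<tau> \<xi>) \<longlongrightarrow> phi 0 / (\<integral>\<xi>'. phi (\<xi> - \<xi>') \<partial>lborel)) (at_right 0)
             \<and> phi 0 / (\<integral>\<xi>'. phi (\<xi> - \<xi>') \<partial>lborel) = 1 / (2 * pi)"
proof
  fix \<xi> :: "real^2"
  have val: "phi 0 / (\<integral>\<xi>'. phi (\<xi> - \<xi>') \<partial>lborel) = 1 / (2 * pi)"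
    by (simp add: phi_integral phi0)
  have eq: "\<rho> \<tau> \<xi> = (1 - exp (- (2*pi) / \<tau>)) / (2*pi)" if "0 < \<tau>" for \<tau>
  proof -
    interpret PPx "M \<tau>" "\<Phi> \<tau>" \<tau>
      using pp that by unfold_locales auto
    show ?thesis
      by (rule rho_exact) (use intensity cont that in auto)
  qed
  have "((\<lambda>\<tau>. \<rho> \<tau> \<xi>) \<longlongrightarrow> 1 / (2 * pi)) (at_right 0)"
  proof (rule Lim_transform_eventually[OF c_lim])
    show "\<forall>\<^sub>F \<tau> in at_right 0. (1 - exp (- (2*pi) / \<tau>)) / (2*pi) = \<rho> \<tau> \<xi>"
      using eq by (auto simp: eventually_at_right_field intro!: exI[of _ 1])
  qed
  then show "((\<lambda>\<tau>. \<rho> \<tau> \<xi>) \<longlongrightarrow> phi 0 / (\<integral>\<xi>'. phi (\<xi> - \<xi>') \<partial>lborel)) (at_right 0)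
             \<and> phi 0 / (\<integral>\<xi>'. phi (\<xi> - \<xi>') \<partial>lborel) = 1 / (2 * pi)"
    using val by simp
qed



end
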